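(* For any special object $L$ of $\mathcal V$, one has $\mathbb O_L(u)=(-1)^t\dfrac{m_L(-u)}{m_L(u)}$.
   Context: Let $\Bbbk$ be a field of characteristic $\neq2$, $t\in\{0,1\}$, and let $\mathcal{NB}_t$ be the nil-Brauer category, here regarded as an ungraded strict $\Bbbk$-linear monoidal category (tensor $\star$, unit $\mathbb1$, composition $\circ$) generated by an object $B$ and morphisms $x:B\to B$, $\tau:B\star B\to B\star B$, $\cap:B\star B\to\mathbb1$, $\cup:\mathbb1\to B\star B$ with relations ($1=1_B$): $\tau\circ\tau=0$; $(\tau\star1)\circ(1\star\tau)\circ(\tau\star1)=(1\star\tau)\circ(\tau\star1)\circ(1\star\tau)$; $\cap\circ\cup=t1_{\mathbb1}$; $(\cap\star1)\circ(1\star\cup)=1=(1\star\cap)\circ(\cup\star1)$; $\cap\circ\tau=0$; $(1\star\cap)\circ(\tau\star1)=(\cap\star1)\circ(1\star\tau)$; $(x\star1)\circ\tau-\tau\circ(1\star x)=1\star1-\cup\circ\cap$; $\cap\circ(1\star x)=-\cap\circ(x\star1)$. Let $\mathcal V$ be a strict $\mathcal{NB}_t$-module category: a $\Bbbk$-linear category with a strict $\Bbbk$-linear monoidal functor $\mu$ from $\mathcal{NB}_t$ to the monoidal category of $\Bbbk$-linear endofunctors of $\mathcal V$ and natural transformations; write $B$ also for $\mu(B)$ and $s_V=\mu(s)_V$. An object $L$ of $\mathcal V$ is special if $\mathrm{End}_{\mathcal V}(L)=\Bbbk$ and $\mathrm{End}_{\mathcal V}(BL)$ is finite-dimensional; $m_L(x)$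 denotes the (monic) minimal polynomial of $x_L:BL\to BL$ (equal to $1$ if $BL=0$). Let $b_r:=\cap\circ(1\star x^r)\circ\cup\in\mathrm{End}(\mathbb1)$ and $\mathbb O(u):=(-1)^t\big(1_{\mathbb1}-2u\sum_{r\ge0}u^{-r-1}b_r\big)\in\mathrm{End}(\mathbb1)[\![u^{-1}]\!]$. For special $L$, $\mu(\mathbb O(u))_L$ acts on $L$ as multiplication by a power series $\mathbb O_L(u)\in\Bbbk[\![u^{-1}]\!]$. *)

theory Defs
  imports "HOL-Computational_Algebra.Computational_Algebra"
begin

text \<open>Composition: cmp g f = g o f.\<close>

record ('o, 'm, 'k) lincat =
  Hom   :: "'o \<Rightarrow> 'o \<Rightarrow> 'm set"
  cmp   :: "'m \<Rightarrow> 'm \<Rightarrow> 'm"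
  idm   :: "'o \<Rightarrow> 'm"
  madd  :: "'m \<Rightarrow> 'm \<Rightarrow> 'm"
  msc   :: "'k \<Rightarrow> 'm \<Rightarrow> 'm"
  mzero :: "'o \<Rightarrow> 'o \<Rightarrow> 'm"

definition msub :: "('o, 'm, 'k::field) lincat \<Rightarrow> 'm \<Rightarrow> 'm \<Rightarrow> 'm" where
  "msub C f g = madd C f (msc C (-1) g)"

definition is_lincat :: "('o, 'm, 'k::field) lincat \<Rightarrow> bool" where
  "is_lincat C \<longleftrightarrow>
    (\<forall>a b c d f. f \<in> Hom C a b \<longrightarrow> f \<in> Hom C c d \<longrightarrow> a = c \<and> b = d) \<and>
    (\<forall>a. idm C a \<in> Hom C a a) \<and>
    (\<forall>a b c f g. f \<in> Hom C a b \<longrightarrow> g \<in> Hom C b c \<longrightarrow> cmp C g f \<in> Hom C a c) \<and>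
    (\<forall>a b c d f g h. f \<in> Hom C a b \<longrightarrow> g \<in> Hom C b c \<longrightarrow> h \<in> Hom C c d \<longrightarrow>
        cmp C h (cmp C g f) = cmp C (cmp C h g) f) \<and>
    (\<forall>a b f. f \<in> Hom C a b \<longrightarrow> cmp C f (idm C a) = f \<and> cmp C (idm C b) f = f) \<and>
    \<comment> \<open>vector space structure on each hom-set\<close>
    (\<forall>a b. mzero C a b \<in> Hom C a b) \<and>
    (\<forall>a b f g. f \<in> Hom C a b \<longrightarrow> g \<in> Hom C a b \<longrightarrow> madd C f g \<in> Hom C a b) \<and>
    (\<forall>a b c f. f \<in> Hom C a b \<longrightarrow> msc C c f \<in> Hom C a b) \<and>
    (\<forall>a b f g h. f \<in> Hom C a b \<longrightarrow> g \<in> Hom C a b \<longrightarrow> h \<in> Hom C a b \<longrightarrow>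
        madd C (madd C f g) h = madd C f (madd C g h)) \<and>
    (\<forall>a b f g. f \<in> Hom C a b \<longrightarrow> g \<in> Hom C a b \<longrightarrow> madd C f g = madd C g f) \<and>
    (\<forall>a b f. f \<in> Hom C a b \<longrightarrow> madd C f (mzero C a b) = f) \<and>
    (\<forall>a b f. f \<in> Hom C a b \<longrightarrow> (\<exists>g \<in> Hom C a b. madd C f g = mzero C a b)) \<and>
    (\<forall>a b f. f \<in> Hom C a b \<longrightarrow> msc C 1 f = f) \<and>
    (\<forall>a b c d f. f \<in> Hom C a b \<longrightarrow> msc C c (msc C d f) = msc C (c * d) f) \<and>
    (\<forall>a b c d f. f \<in> Hom C a b \<longrightarrow> msc C (c + d) f = madd C (msc C c f) (msc C d f)) \<and>
    (\<forall>a b c f g. f \<in> Hom C a b \<longrightarrow> g \<in> Hom C a b \<longrightarrow>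
        msc C c (madd C f g) = madd C (msc C c f) (msc C c g)) \<and>
    \<comment> \<open>bilinearity of composition\<close>
    (\<forall>a b c f1 f2 g. f1 \<in> Hom C a b \<longrightarrow> f2 \<in> Hom C a b \<longrightarrow> g \<in> Hom C b c \<longrightarrow>
        cmp C g (madd C f1 f2) = madd C (cmp C g f1) (cmp C g f2)) \<and>
    (\<forall>a b c f g1 g2. f \<in> Hom C a b \<longrightarrow> g1 \<in> Hom C b c \<longrightarrow> g2 \<in> Hom C b c \<longrightarrow>
        cmp C (madd C g1 g2) f = madd C (cmp C g1 f) (cmp C g2 f)) \<and>
    (\<forall>a b c k f g. f \<in> Hom C a b \<longrightarrow> g \<in> Hom C b c \<longrightarrow>
        cmp C g (msc C k f) = msc C k (cmp C g f) \<and> cmp C (msc C k g) f = msc C k (cmp C g f))"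

definition lincomb :: "('o, 'm, 'k::field) lincat \<Rightarrow> 'o \<Rightarrow> 'o \<Rightarrow> ('k \<times> 'm) list \<Rightarrow> 'm" where
  "lincomb C a b ps = foldr (\<lambda>(c, g) acc. madd C (msc C c g) acc) ps (mzero C a b)"

definition findim_hom :: "('o, 'm, 'k::field) lincat \<Rightarrow> 'o \<Rightarrow> 'o \<Rightarrow> bool" where
  "findim_hom C a b \<longleftrightarrow>
    (\<exists>bs. set bs \<subseteq> Hom C a b \<and>
       (\<forall>f \<in> Hom C a b. \<exists>cs. length cs = length bs \<and> f = lincomb C a b (zip cs bs)))"

fun mpow :: "('o, 'm, 'k) lincat \<Rightarrow> 'o \<Rightarrow> 'm \<Rightarrow> nat \<Rightarrow> 'm" where
  "mpow C a f 0 = idm C a"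
| "mpow C a f (Suc n) = cmp C f (mpow C a f n)"

definition peval :: "('o, 'm, 'k::field) lincat \<Rightarrow> 'o \<Rightarrow> 'k poly \<Rightarrow> 'm \<Rightarrow> 'm" where
  "peval C a p f = lincomb C a a (map (\<lambda>i. (coeff p i, mpow C a f i)) [0..<Suc (degree p)])"

definition minpoly :: "('o, 'm, 'k::field) lincat \<Rightarrow> 'o \<Rightarrow> 'm \<Rightarrow> 'k poly" where
  "minpoly C a f = (THE p. lead_coeff p = 1 \<and> peval C a p f = mzero C a a \<and>
      (\<forall>q. q \<noteq> 0 \<and> peval C a q f = mzero C a a \<longrightarrow> degree p \<le> degree q))"

text \<open>Since NB_t is presented by generators and relations, a strict k-linear monoidal functor
  mu : NB_t -> End(V) amounts to: a k-linear endofunctor B = mu(B) of V and natural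
  transformations x : B => B, tau : BB => BB, cap : BB => Id, cup : Id => BB satisfying the
  defining relations. Tensor product of endofunctors is composition, (F * G)(V) = F(G(V)),
  so for a natural transformation a we have (a * 1)_V = a_{BV} and (1 * a)_V = B(a_V).\<close>

record ('o, 'm) nbdata =
  Bo   :: "'o \<Rightarrow> 'o"
  Bm   :: "'m \<Rightarrow> 'm"
  xx   :: "'o \<Rightarrow> 'm"
  tau  :: "'o \<Rightarrow> 'm"
  cap  :: "'o \<Rightarrow> 'm"
  cup  :: "'o \<Rightarrow> 'm"

definition is_lin_endofunctor :: "('o, 'm, 'k::field) lincat \<Rightarrow> ('o \<Rightarrow> 'o) \<Rightarrow> ('m \<Rightarrow> 'm) \<Rightarrow> bool" where
  "is_lin_endofunctor C Fo Fm \<longleftrightarrow>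
    (\<forall>a b f. f \<in> Hom C a b \<longrightarrow> Fm f \<in> Hom C (Fo a) (Fo b)) \<and>
    (\<forall>a. Fm (idm C a) = idm C (Fo a)) \<and>
    (\<forall>a b c f g. f \<in> Hom C a b \<longrightarrow> g \<in> Hom C b c \<longrightarrow> Fm (cmp C g f) = cmp C (Fm g) (Fm f)) \<and>
    (\<forall>a b f g. f \<in> Hom C a b \<longrightarrow> g \<in> Hom C a b \<longrightarrow> Fm (madd C f g) = madd C (Fm f) (Fm g)) \<and>
    (\<forall>a b c f. f \<in> Hom C a b \<longrightarrow> Fm (msc C c f) = msc C c (Fm f))"

definition is_nb_module :: "('o, 'm, 'k::field) lincat \<Rightarrow> nat \<Rightarrow> ('o, 'm) nbdata \<Rightarrow> bool" where
  "is_nb_module C t M \<longleftrightarrow>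
    is_lincat C \<and> is_lin_endofunctor C (Bo M) (Bm M) \<and>
    \<comment> \<open>components\<close>
    (\<forall>V. xx M V \<in> Hom C (Bo M V) (Bo M V) \<and>
         tau M V \<in> Hom C (Bo M (Bo M V)) (Bo M (Bo M V)) \<and>
         cap M V \<in> Hom C (Bo M (Bo M V)) V \<and>
         cup M V \<in> Hom C V (Bo M (Bo M V))) \<and>
    \<comment> \<open>naturality\<close>
    (\<forall>a b f. f \<in> Hom C a b \<longrightarrow>
        cmp C (Bm M f) (xx M a) = cmp C (xx M b) (Bm M f) \<and>
        cmp C (Bm M (Bm M f)) (tau M a) = cmp C (tau M b) (Bm M (Bm M f)) \<and>
        cmp C f (cap M a) = cmp C (cap M b) (Bm M (Bm M f)) \<and>
        cmp C (Bm M (Bm M f)) (cup M a) = cmp C (cup M b) f) \<and>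
    \<comment> \<open>defining relations of NB_t, componentwise\<close>
    (\<forall>V. let B = Bo M; Bf = Bm M in
        cmp C (tau M V) (tau M V) = mzero C (B (B V)) (B (B V)) \<and>
        cmp C (tau M (B V)) (cmp C (Bf (tau M V)) (tau M (B V)))
          = cmp C (Bf (tau M V)) (cmp C (tau M (B V)) (Bf (tau M V))) \<and>
        cmp C (cap M V) (cup M V) = msc C (of_nat t) (idm C V) \<and>
        cmp C (cap M (B V)) (Bf (cup M V)) = idm C (B V) \<and>
        cmp C (Bf (cap M V)) (cup M (B V)) = idm C (B V) \<and>
        cmp C (cap M V) (tau M V) = mzero C (B (B V)) V \<and>
        cmp C (Bf (cap M V)) (tau M (B V)) = cmp C (cap M (B V)) (Bf (tau M V)) \<and>
        msub C (cmp C (xx M (B V)) (tau M V)) (cmp C (tau M V) (Bf (xx M V)))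
          = msub C (idm C (B (B V))) (cmp C (cup M V) (cap M V)) \<and>
        cmp C (cap M V) (Bf (xx M V)) = msc C (-1) (cmp C (cap M V) (xx M (B V))))"

definition special :: "('o, 'm, 'k::field) lincat \<Rightarrow> ('o, 'm) nbdata \<Rightarrow> 'o \<Rightarrow> bool" where
  "special C M L \<longleftrightarrow>
    Hom C L L = {msc C c (idm C L) | c. True} \<and> idm C L \<noteq> mzero C L L \<and>
    findim_hom C (Bo M L) (Bo M L)"

definition bubble :: "('o, 'm, 'k::field) lincat \<Rightarrow> ('o, 'm) nbdata \<Rightarrow> 'o \<Rightarrow> nat \<Rightarrow> 'k" where
  "bubble C M L r = (THE c. cmp C (cap M L) (cmp C (Bm M (mpow C (Bo M L) (xx M L) r)) (cup M L))
                           = msc C c (idm C L))"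

text \<open>O_L(u) as a formal power series in w = u^{-1}:
  (-1)^t (1 - 2 u sum_r u^{-r-1} b_r) = (-1)^t (1 - 2 sum_r b_r w^r).\<close>

definition O_L :: "('o, 'm, 'k::field) lincat \<Rightarrow> nat \<Rightarrow> ('o, 'm) nbdata \<Rightarrow> 'o \<Rightarrow> 'k fps" where
  "O_L C t M L = fps_const ((-1) ^ t) * (1 - 2 * Abs_fps (bubble C M L))"

definition m_L :: "('o, 'm, 'k::field) lincat \<Rightarrow> ('o, 'm) nbdata \<Rightarrow> 'o \<Rightarrow> 'k poly" where
  "m_L C M L = minpoly C (Bo M L) (xx M L)"

text \<open>For a polynomial m of degree d, m(u) = u^d (reflect_poly m)(u^{-1}); hence the rational
  function m(-u)/m(u), expanded in k[[u^{-1}]], is the fps quotient below.\<close>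

definition ratio_at_infty :: "'k::field poly \<Rightarrow> 'k fps" where
  "ratio_at_infty m = fps_of_poly (reflect_poly (pcompose m [:0, -1:])) / fps_of_poly (reflect_poly m)"

end

theory Submission
  imports Defs "HOL-Computational_Algebra.Computational_Algebra" "Jordan_Normal_Form.Determinant"
begin


definition harr :: "('o, 'm, 'k) lincat \<Rightarrow> 'm \<Rightarrow> bool" where
  "harr C f \<longleftrightarrow> (\<exists>a b. f \<in> Hom C a b)"
definition hdom :: "('o, 'm, 'k) lincat \<Rightarrow> 'm \<Rightarrow> 'o" where
  "hdom C f = (THE a. \<exists>b. f \<in> Hom C a b)"
definition hcod :: "('o, 'm, 'k) lincat \<Rightarrow> 'm \<Rightarrow> 'o" where
  "hcod C f = (THE b. \<exists>a. f \<in> Hom C a b)"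

locale LC =
  fixes C :: "('o, 'm, 'k::field) lincat"
  assumes lc: "is_lincat C"
begin

lemmas ax = lc[unfolded is_lincat_def]
lemmas ax_uniq = ax[THEN conjunct1]
lemmas ax_id = ax[THEN conjunct2, THEN conjunct1]
lemmas ax_cmp = ax[THEN conjunct2, THEN conjunct2, THEN conjunct1]
lemmas ax_assoc = ax[THEN conjunct2, THEN conjunct2, THEN conjunct2, THEN conjunct1]
lemmas ax_idlaw = ax[THEN conjunct2, THEN conjunct2, THEN conjunct2, THEN conjunct2, THEN conjunct1]
lemmas ax_zero = ax[THEN conjunct2, THEN conjunct2, THEN conjunct2, THEN conjunct2, THEN conjunct2, THEN conjunct1]
lemmas ax_addc = ax[THEN conjunct2, THEN conjunct2, THEN conjunct2, THEN conjunct2, THEN conjunct2, THEN conjunct2, THEN conjunct1]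
lemmas ax_mscc = ax[THEN conjunct2, THEN conjunct2, THEN conjunct2, THEN conjunct2, THEN conjunct2, THEN conjunct2, THEN conjunct2, THEN conjunct1]
lemmas ax_addassoc = ax[THEN conjunct2, THEN conjunct2, THEN conjunct2, THEN conjunct2, THEN conjunct2, THEN conjunct2, THEN conjunct2, THEN conjunct2, THEN conjunct1]
lemmas ax_addcomm = ax[THEN conjunct2, THEN conjunct2, THEN conjunct2, THEN conjunct2, THEN conjunct2, THEN conjunct2, THEN conjunct2, THEN conjunct2, THEN conjunct2, THEN conjunct1]
lemmas ax_addzero = ax[THEN conjunct2, THEN conjunct2, THEN conjunct2, THEN conjunct2, THEN conjunct2, THEN conjunct2, THEN conjunct2, THEN conjunct2, THEN conjunct2, THEN conjunct2, THEN conjunct1]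
lemmas ax_inv = ax[THEN conjunct2, THEN conjunct2, THEN conjunct2, THEN conjunct2, THEN conjunct2, THEN conjunct2, THEN conjunct2, THEN conjunct2, THEN conjunct2, THEN conjunct2, THEN conjunct2, THEN conjunct1]
lemmas ax_scone = ax[THEN conjunct2, THEN conjunct2, THEN conjunct2, THEN conjunct2, THEN conjunct2, THEN conjunct2, THEN conjunct2, THEN conjunct2, THEN conjunct2, THEN conjunct2, THEN conjunct2, THEN conjunct2, THEN conjunct1]
lemmas ax_scsc = ax[THEN conjunct2, THEN conjunct2, THEN conjunct2, THEN conjunct2, THEN conjunct2, THEN conjunct2, THEN conjunct2, THEN conjunct2, THEN conjunct2, THEN conjunct2, THEN conjunct2, THEN conjunct2, THEN conjunct2, THEN conjunct1]
lemmas ax_scdistr = ax[THEN conjunct2, THEN conjunct2, THEN conjunct2, THEN conjunct2, THEN conjunct2, THEN conjunct2, THEN conjunct2, THEN conjunct2, THEN conjunct2, THEN conjunct2, THEN conjunct2, THEN conjunct2, THEN conjunct2, THEN conjunct2, THEN conjunct1]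
lemmas ax_scadd = ax[THEN conjunct2, THEN conjunct2, THEN conjunct2, THEN conjunct2, THEN conjunct2, THEN conjunct2, THEN conjunct2, THEN conjunct2, THEN conjunct2, THEN conjunct2, THEN conjunct2, THEN conjunct2, THEN conjunct2, THEN conjunct2, THEN conjunct2, THEN conjunct1]
lemmas ax_cmpaddr = ax[THEN conjunct2, THEN conjunct2, THEN conjunct2, THEN conjunct2, THEN conjunct2, THEN conjunct2, THEN conjunct2, THEN conjunct2, THEN conjunct2, THEN conjunct2, THEN conjunct2, THEN conjunct2, THEN conjunct2, THEN conjunct2, THEN conjunct2, THEN conjunct2, THEN conjunct1]
lemmas ax_cmpaddl = ax[THEN conjunct2, THEN conjunct2, THEN conjunct2, THEN conjunct2, THEN conjunct2, THEN conjunct2, THEN conjunct2, THEN conjunct2, THEN conjunct2, THEN conjunct2, THEN conjunct2, THEN conjunct2, THEN conjunct2, THEN conjunct2, THEN conjunct2, THEN conjunct2, THEN conjunct2, THEN conjunct1]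
lemmas ax_cmpsc = ax[THEN conjunct2, THEN conjunct2, THEN conjunct2, THEN conjunct2, THEN conjunct2, THEN conjunct2, THEN conjunct2, THEN conjunct2, THEN conjunct2, THEN conjunct2, THEN conjunct2, THEN conjunct2, THEN conjunct2, THEN conjunct2, THEN conjunct2, THEN conjunct2, THEN conjunct2, THEN conjunct2]

abbreviation "arr \<equiv> harr C"
abbreviation "dm \<equiv> hdom C"
abbreviation "cd \<equiv> hcod C"

lemma uniq: "f \<in> Hom C a b \<Longrightarrow> f \<in> Hom C c d \<Longrightarrow> a = c \<and> b = d"
  using ax_uniq by blast

lemma in_hom_iff: "f \<in> Hom C a b \<longleftrightarrow> arr f \<and> dm f = a \<and> cd f = b"
proof
  assume h: "f \<in> Hom C a b"
  have "dm f = a" unfolding hdom_def using h uniq by blast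
  moreover have "cd f = b" unfolding hcod_def using h uniq by blast
  ultimately show "arr f \<and> dm f = a \<and> cd f = b" using h by (auto simp: harr_def)
next
  assume h: "arr f \<and> dm f = a \<and> cd f = b"
  then obtain a' b' where f: "f \<in> Hom C a' b'" unfolding harr_def by blast
  have "dm f = a'" unfolding hdom_def using f uniq by blast
  moreover have "cd f = b'" unfolding hcod_def using f uniq by blast
  ultimately show "f \<in> Hom C a b" using f h by simp
qed

lemma arr_hom: "arr f \<Longrightarrow> f \<in> Hom C (dm f) (cd f)"
  using in_hom_iff by blast

lemma idm_hom: "idm C a \<in> Hom C a a"
  using ax_id by blast
lemma idm_ty[simp]: "arr (idm C a)" "dm (idm C a) = a" "cd (idm C a) = a"
  using idm_hom in_hom_iff by blast+

lemma cmp_hom: "f \<in> Hom C a b \<Longrightarrow> g \<in> Hom C b c \<Longrightarrow> cmp C g f \<in> Hom C a c"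
  using ax_cmp by blast

lemma cmp_ty[simp]:
  assumes "arr f" "arr g" "dm g = cd f"
  shows "arr (cmp C g f)" "dm (cmp C g f) = dm f" "cd (cmp C g f) = cd g"
proof -
  have "cmp C g f \<in> Hom C (dm f) (cd g)"
    using cmp_hom[of f "dm f" "cd f" g "cd g"] assms arr_hom by metis
  thus "arr (cmp C g f)" "dm (cmp C g f) = dm f" "cd (cmp C g f) = cd g"
    using in_hom_iff by blast+
qed

lemma assoc[simp]:
  assumes "arr f" "arr g" "arr h" "dm g = cd f" "dm h = cd g"
  shows "cmp C (cmp C h g) f = cmp C h (cmp C g f)"
proof -
  have "\<forall>a b c d f g h. f \<in> Hom C a b \<longrightarrow> g \<in> Hom C b c \<longrightarrow> h \<in> Hom C c d \<longrightarrow>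
        cmp C h (cmp C g f) = cmp C (cmp C h g) f" using ax_assoc by blast
  thus ?thesis using assms arr_hom by metis
qed

lemma id_l[simp]: "arr f \<Longrightarrow> cd f = b \<Longrightarrow> cmp C (idm C b) f = f"
  using ax_idlaw arr_hom by blast
lemma id_r[simp]: "arr f \<Longrightarrow> dm f = a \<Longrightarrow> cmp C f (idm C a) = f"
  using ax_idlaw arr_hom by blast

lemma mzero_hom: "mzero C a b \<in> Hom C a b"
  using ax_zero by blast
lemma mzero_ty[simp]: "arr (mzero C a b)" "dm (mzero C a b) = a" "cd (mzero C a b) = b"
  using mzero_hom in_hom_iff by blast+

lemma madd_ty[simp]:
  assumes "arr f" "arr g" "dm g = dm f" "cd g = cd f"
  shows "arr (madd C f g)" "dm (madd C f g) = dm f" "cd (madd C f g) = cd f"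
proof -
  have "madd C f g \<in> Hom C (dm f) (cd f)"
    using ax_addc assms arr_hom by metis
  thus "arr (madd C f g)" "dm (madd C f g) = dm f" "cd (madd C f g) = cd f"
    using in_hom_iff by blast+
qed

lemma msc_ty[simp]:
  assumes "arr f"
  shows "arr (msc C c f)" "dm (msc C c f) = dm f" "cd (msc C c f) = cd f"
proof -
  have "msc C c f \<in> Hom C (dm f) (cd f)"
    using ax_mscc assms arr_hom by metis
  thus "arr (msc C c f)" "dm (msc C c f) = dm f" "cd (msc C c f) = cd f"
    using in_hom_iff by blast+
qed

lemma add_assoc[simp]:
  assumes "arr f" "arr g" "arr h" "dm g = dm f" "cd g = cd f" "dm h = dm f" "cd h = cd f"
  shows "madd C (madd C f g) h = madd C f (madd C g h)"
proof -
  have "\<forall>a b f g h. f \<in> Hom C a b \<longrightarrow> g \<in> Hom C a b \<longrightarrow> h \<in> Hom C a b \<longrightarrow>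
        madd C (madd C f g) h = madd C f (madd C g h)" using ax_addassoc by blast
  thus ?thesis using assms arr_hom by metis
qed

lemma add_comm:
  assumes "arr f" "arr g" "dm g = dm f" "cd g = cd f"
  shows "madd C f g = madd C g f"
proof -
  have "\<forall>a b f g. f \<in> Hom C a b \<longrightarrow> g \<in> Hom C a b \<longrightarrow> madd C f g = madd C g f"
    using ax_addcomm by blast
  thus ?thesis using assms arr_hom by metis
qed

lemma add_lcomm:
  assumes "arr f" "arr g" "arr h" "dm g = dm f" "cd g = cd f" "dm h = dm f" "cd h = cd f"
  shows "madd C f (madd C g h) = madd C g (madd C f h)"
  using assms add_assoc[of f g h] add_assoc[of g f h] add_comm[of f g] by simp

lemma add_zero[simp]: "arr f \<Longrightarrow> dm f = a \<Longrightarrow> cd f = b \<Longrightarrow> madd C f (mzero C a b) = f"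
  using ax_addzero arr_hom by blast

lemma zero_add[simp]: "arr f \<Longrightarrow> dm f = a \<Longrightarrow> cd f = b \<Longrightarrow> madd C (mzero C a b) f = f"
  using add_comm[of f "mzero C a b"] by simp

lemma add_inv: "arr f \<Longrightarrow> \<exists>g. arr g \<and> dm g = dm f \<and> cd g = cd f \<and> madd C f g = mzero C (dm f) (cd f)"
proof -
  assume "arr f"
  hence "\<exists>g \<in> Hom C (dm f) (cd f). madd C f g = mzero C (dm f) (cd f)"
    using ax_inv arr_hom by blast
  thus ?thesis using in_hom_iff by blast
qed

lemma sc_one[simp]: "arr f \<Longrightarrow> msc C 1 f = f"
  using ax_scone arr_hom by blast
lemma sc_sc[simp]: "arr f \<Longrightarrow> msc C c (msc C d f) = msc C (c * d) f"
  using ax_scsc arr_hom by blast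
lemma sc_add_distr: "arr f \<Longrightarrow> msc C (c + d) f = madd C (msc C c f) (msc C d f)"
  using ax_scdistr arr_hom by blast
lemma sc_add[simp]: "arr f \<Longrightarrow> arr g \<Longrightarrow> dm g = dm f \<Longrightarrow> cd g = cd f \<Longrightarrow>
    msc C c (madd C f g) = madd C (msc C c f) (msc C c g)"
proof -
  have "\<forall>a b c f g. f \<in> Hom C a b \<longrightarrow> g \<in> Hom C a b \<longrightarrow>
        msc C c (madd C f g) = madd C (msc C c f) (msc C c g)" using ax_scadd by blast
  thus "arr f \<Longrightarrow> arr g \<Longrightarrow> dm g = dm f \<Longrightarrow> cd g = cd f \<Longrightarrow> ?thesis" using arr_hom by metis
qed

lemma cmp_add_r[simp]: "arr f1 \<Longrightarrow> arr f2 \<Longrightarrow> arr g \<Longrightarrow> dm f2 = dm f1 \<Longrightarrow> cd f2 = cd f1 \<Longrightarrow> dm g = cd f1 \<Longrightarrow>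
   cmp C g (madd C f1 f2) = madd C (cmp C g f1) (cmp C g f2)"
proof -
  have "\<forall>a b c f1 f2 g. f1 \<in> Hom C a b \<longrightarrow> f2 \<in> Hom C a b \<longrightarrow> g \<in> Hom C b c \<longrightarrow>
        cmp C g (madd C f1 f2) = madd C (cmp C g f1) (cmp C g f2)" using ax_cmpaddr by blast
  thus "arr f1 \<Longrightarrow> arr f2 \<Longrightarrow> arr g \<Longrightarrow> dm f2 = dm f1 \<Longrightarrow> cd f2 = cd f1 \<Longrightarrow> dm g = cd f1 \<Longrightarrow> ?thesis"
    using arr_hom by metis
qed

lemma cmp_add_l[simp]: "arr f \<Longrightarrow> arr g1 \<Longrightarrow> arr g2 \<Longrightarrow> dm g2 = dm g1 \<Longrightarrow> cd g2 = cd g1 \<Longrightarrow> dm g1 = cd f \<Longrightarrow>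
   cmp C (madd C g1 g2) f = madd C (cmp C g1 f) (cmp C g2 f)"
proof -
  have "\<forall>a b c f g1 g2. f \<in> Hom C a b \<longrightarrow> g1 \<in> Hom C b c \<longrightarrow> g2 \<in> Hom C b c \<longrightarrow>
        cmp C (madd C g1 g2) f = madd C (cmp C g1 f) (cmp C g2 f)" using ax_cmpaddl by blast
  thus "arr f \<Longrightarrow> arr g1 \<Longrightarrow> arr g2 \<Longrightarrow> dm g2 = dm g1 \<Longrightarrow> cd g2 = cd g1 \<Longrightarrow> dm g1 = cd f \<Longrightarrow> ?thesis"
    using arr_hom by metis
qed

lemma cmp_sc_r[simp]: "arr f \<Longrightarrow> arr g \<Longrightarrow> dm g = cd f \<Longrightarrow> cmp C g (msc C k f) = msc C k (cmp C g f)"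
  using ax_cmpsc arr_hom by metis
lemma cmp_sc_l[simp]: "arr f \<Longrightarrow> arr g \<Longrightarrow> dm g = cd f \<Longrightarrow> cmp C (msc C k g) f = msc C k (cmp C g f)"
  using ax_cmpsc arr_hom by metis

lemma sc_zero[simp]: "arr f \<Longrightarrow> dm f = a \<Longrightarrow> cd f = b \<Longrightarrow> msc C 0 f = mzero C a b"
proof -
  assume f: "arr f" "dm f = a" "cd f = b"
  have e: "msc C 0 f = madd C (msc C 0 f) (msc C 0 f)" using sc_add_distr[OF f(1), of 0 0] by simp
  obtain g where g: "arr g" "dm g = a" "cd g = b" "madd C (msc C 0 f) g = mzero C a b"
    using add_inv[of "msc C 0 f"] f by auto
  have "mzero C a b = madd C (madd C (msc C 0 f) (msc C 0 f)) g" using e g by simp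
  also have "\<dots> = msc C 0 f" using g f by simp
  finally show ?thesis by simp
qed

lemma sc_mzero[simp]: "msc C c (mzero C a b) = mzero C a b"
proof -
  have "msc C c (mzero C a b) = msc C c (msc C 0 (mzero C a b))" by simp
  also have "\<dots> = msc C (c * 0) (mzero C a b)" by (rule sc_sc) simp
  also have "\<dots> = mzero C a b" by simp
  finally show ?thesis .
qed

lemma cmp_zero_r[simp]: "arr g \<Longrightarrow> dm g = b \<Longrightarrow> cmp C g (mzero C a b) = mzero C a (cd g)"
proof -
  assume g: "arr g" "dm g = b"
  have "cmp C g (mzero C a b) = cmp C g (msc C 0 (mzero C a b))" by simp
  also have "\<dots> = msc C 0 (cmp C g (mzero C a b))" by (rule cmp_sc_r) (simp_all add: g)
  also have "\<dots> = mzero C a (cd g)" using g by simp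
  finally show ?thesis .
qed

lemma cmp_zero_l[simp]: "arr f \<Longrightarrow> cd f = b \<Longrightarrow> cmp C (mzero C b c) f = mzero C (dm f) c"
proof -
  assume f: "arr f" "cd f = b"
  have "cmp C (mzero C b c) f = cmp C (msc C 0 (mzero C b c)) f" by simp
  also have "\<dots> = msc C 0 (cmp C (mzero C b c) f)" by (rule cmp_sc_l) (simp_all add: f)
  also have "\<dots> = mzero C (dm f) c" using f by simp
  finally show ?thesis .
qed

lemma add_neg: "arr f \<Longrightarrow> madd C f (msc C (-1) f) = mzero C (dm f) (cd f)"
proof -
  assume f: "arr f"
  have "madd C f (msc C (-1) f) = madd C (msc C 1 f) (msc C (-1) f)" using f by simp
  also have "\<dots> = msc C (1 + -1) f" using sc_add_distr[OF f, of 1 "-1"] by simp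
  finally show ?thesis using f by simp
qed

lemma sc_add_distr'[simp]: "arr f \<Longrightarrow> madd C (msc C c f) (msc C d f) = msc C (c + d) f"
  using sc_add_distr by simp

lemma eq_by_diff:
  assumes "arr f" "arr g" "dm g = dm f" "cd g = cd f" "madd C f (msc C (-1) g) = mzero C (dm f) (cd f)"
  shows "f = g"
proof -
  have "f = madd C f (mzero C (dm f) (cd f))" using assms by simp
  also have "mzero C (dm f) (cd f) = madd C (msc C (-1) g) g"
    using add_neg[of g] add_comm[of g "msc C (-1) g"] assms by simp
  also have "madd C f (madd C (msc C (-1) g) g) = madd C (madd C f (msc C (-1) g)) g"
    by (rule add_assoc[symmetric]) (simp_all add: assms)
  also have "\<dots> = madd C (mzero C (dm f) (cd f)) g" by (simp only: assms(5))
  also have "\<dots> = g" using assms by simp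
  finally show ?thesis .
qed

lemma add_cancel_neg:
  assumes "arr f" "arr g" "dm g = dm f" "cd g = cd f" "madd C f g = mzero C (dm f) (cd f)"
  shows "g = msc C (-1) f"
proof -
  have "madd C g (msc C (-1) (msc C (-1) f)) = madd C g f" using assms by simp
  also have "\<dots> = mzero C (dm f) (cd f)" using assms add_comm by metis
  finally show ?thesis using eq_by_diff[of g "msc C (-1) f"] assms by simp
qed

lemma sc_inj:
  assumes "arr f" "msc C c f = msc C d f" "f \<noteq> mzero C (dm f) (cd f)"
  shows "c = d"
proof (rule ccontr)
  assume "c \<noteq> d"
  have "msc C (c - d) f = madd C (msc C c f) (msc C (- d) f)" using assms sc_add_distr[of f c "-d"] by simp
  also have "\<dots> = madd C (msc C d f) (msc C (- d) f)" using assms by simp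
  also have "\<dots> = mzero C (dm f) (cd f)" using assms sc_add_distr[of f d "-d"] by simp
  finally have "msc C (inverse (c - d)) (msc C (c - d) f) = mzero C (dm f) (cd f)" by simp
  hence "f = mzero C (dm f) (cd f)" using \<open>c \<noteq> d\<close> assms by simp
  thus False using assms by simp
qed

end


locale NB = LC C for C :: "('o, 'm, 'k::field) lincat" +
  fixes t :: nat and M :: "('o, 'm) nbdata"
  assumes nb: "is_nb_module C t M"
begin

abbreviation "B \<equiv> Bo M"
abbreviation "F \<equiv> Bm M"
abbreviation "x \<equiv> xx M"
abbreviation "tu \<equiv> tau M"
abbreviation "cp \<equiv> cap M"
abbreviation "cu \<equiv> cup M"

lemmas nbx = nb[unfolded is_nb_module_def]
lemmas fun_ax = nbx[THEN conjunct2, THEN conjunct1, unfolded is_lin_endofunctor_def]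
lemmas gen_ax = nbx[THEN conjunct2, THEN conjunct2, THEN conjunct1]
lemmas nat_ax = nbx[THEN conjunct2, THEN conjunct2, THEN conjunct2, THEN conjunct1]
lemmas rel_ax = nbx[THEN conjunct2, THEN conjunct2, THEN conjunct2, THEN conjunct2, unfolded Let_def]

lemma F_ty[simp]: assumes "arr f" shows "arr (F f)" "dm (F f) = B (dm f)" "cd (F f) = B (cd f)"
proof -
  have "F f \<in> Hom C (B (dm f)) (B (cd f))" using fun_ax[THEN conjunct1] arr_hom[OF assms] by blast
  thus "arr (F f)" "dm (F f) = B (dm f)" "cd (F f) = B (cd f)" using in_hom_iff by blast+
qed

lemma F_id[simp]: "F (idm C a) = idm C (B a)"
  using fun_ax[THEN conjunct2, THEN conjunct1] by blast

lemma F_cmp[simp]: "arr f \<Longrightarrow> arr g \<Longrightarrow> dm g = cd f \<Longrightarrow> F (cmp C g f) = cmp C (F g) (F f)"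
  using fun_ax[THEN conjunct2, THEN conjunct2, THEN conjunct1] arr_hom by metis

lemma F_add[simp]: "arr f \<Longrightarrow> arr g \<Longrightarrow> dm g = dm f \<Longrightarrow> cd g = cd f \<Longrightarrow> F (madd C f g) = madd C (F f) (F g)"
  using fun_ax[THEN conjunct2, THEN conjunct2, THEN conjunct2, THEN conjunct1] arr_hom by metis

lemma F_sc[simp]: "arr f \<Longrightarrow> F (msc C c f) = msc C c (F f)"
  using fun_ax[THEN conjunct2, THEN conjunct2, THEN conjunct2, THEN conjunct2] arr_hom by metis

lemma F_zero[simp]: "F (mzero C a b) = mzero C (B a) (B b)"
proof -
  have "F (mzero C a b) = F (msc C 0 (mzero C a b))" by simp
  also have "\<dots> = msc C 0 (F (mzero C a b))" by (rule F_sc) simp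
  also have "\<dots> = mzero C (B a) (B b)" by simp
  finally show ?thesis .
qed

lemma x_ty[simp]: "arr (x V)" "dm (x V) = B V" "cd (x V) = B V"
  using gen_ax in_hom_iff by blast+
lemma tu_ty[simp]: "arr (tu V)" "dm (tu V) = B (B V)" "cd (tu V) = B (B V)"
  using gen_ax in_hom_iff by blast+
lemma cp_ty[simp]: "arr (cp V)" "dm (cp V) = B (B V)" "cd (cp V) = V"
  using gen_ax in_hom_iff by blast+
lemma cu_ty[simp]: "arr (cu V)" "dm (cu V) = V" "cd (cu V) = B (B V)"
  using gen_ax in_hom_iff by blast+

lemma nat_x: "arr f \<Longrightarrow> cmp C (F f) (x (dm f)) = cmp C (x (cd f)) (F f)"
  using nat_ax arr_hom by blast
lemma nat_tu: "arr f \<Longrightarrow> cmp C (F (F f)) (tu (dm f)) = cmp C (tu (cd f)) (F (F f))"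
  using nat_ax arr_hom by blast
lemma nat_cp: "arr f \<Longrightarrow> cmp C f (cp (dm f)) = cmp C (cp (cd f)) (F (F f))"
  using nat_ax arr_hom by blast
lemma nat_cu: "arr f \<Longrightarrow> cmp C (F (F f)) (cu (dm f)) = cmp C (cu (cd f)) f"
  using nat_ax arr_hom by blast

lemma r_tt: "cmp C (tu V) (tu V) = mzero C (B (B V)) (B (B V))" using rel_ax by blast
lemma r_capcup: "cmp C (cp V) (cu V) = msc C (of_nat t) (idm C V)" using rel_ax by blast
lemma r_zz1: "cmp C (cp (B V)) (F (cu V)) = idm C (B V)" using rel_ax by blast
lemma r_zz2: "cmp C (F (cp V)) (cu (B V)) = idm C (B V)" using rel_ax by blast
lemma r_captau: "cmp C (cp V) (tu V) = mzero C (B (B V)) V" using rel_ax by blast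
lemma r_pitch: "cmp C (F (cp V)) (tu (B V)) = cmp C (cp (B V)) (F (tu V))" using rel_ax by blast
lemma r_dot: "msub C (cmp C (x (B V)) (tu V)) (cmp C (tu V) (F (x V)))
          = msub C (idm C (B (B V))) (cmp C (cu V) (cp V))" using rel_ax by blast
lemma r_capdot: "cmp C (cp V) (F (x V)) = msc C (-1) (cmp C (cp V) (x (B V)))" using rel_ax by blast

lemma nest: "cmp C h g = k \<Longrightarrow> arr f \<Longrightarrow> arr g \<Longrightarrow> arr h \<Longrightarrow> dm g = cd f \<Longrightarrow> dm h = cd g \<Longrightarrow>
   cmp C h (cmp C g f) = cmp C k f"
  using assoc[of f g h] by simp

lemma gamma_inv:
  assumes "arr p" "dm p = V" "cd p = B (B V)"
  shows "cmp C (F (cmp C (cp (B V)) (F p))) (cu V) = p"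
proof -
  have "cmp C (F (cmp C (cp (B V)) (F p))) (cu V) = cmp C (F (cp (B V))) (cmp C (F (F p)) (cu V))"
    using assms by simp
  also have "cmp C (F (F p)) (cu V) = cmp C (cu (B (B V))) p" using nat_cu[of p] assms by simp
  also have "cmp C (F (cp (B V))) (cmp C (cu (B (B V))) p) = p"
    using assms by (simp add: nest[OF r_zz2])
  finally show ?thesis .
qed

lemma gamma_inv2:
  assumes "arr g" "dm g = B V" "cd g = B V"
  shows "cmp C (cp (B V)) (F (cmp C (F g) (cu V))) = g"
proof -
  have "cmp C (cp (B V)) (F (cmp C (F g) (cu V))) = cmp C (cmp C (cp (B V)) (F (F g))) (F (cu V))"
    using assms by simp
  also have "cmp C (cp (B V)) (F (F g)) = cmp C g (cp (B V))" using nat_cp[of g] assms by simp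
  also have "cmp C (cmp C g (cp (B V))) (F (cu V)) = g" using assms by (simp add: r_zz1)
  finally show ?thesis .
qed

lemma gamma_inj:
  assumes "arr p" "dm p = V" "cd p = B (B V)" "cmp C (cp (B V)) (F p) = mzero C (B V) (B V)"
  shows "p = mzero C V (B (B V))"
  using gamma_inv[OF assms(1-3)] assms(4) by simp

lemma dot_cup: "cmp C (x (B V)) (cu V) = msc C (-1) (cmp C (F (x V)) (cu V))"
proof -
  let ?p = "madd C (cmp C (x (B V)) (cu V)) (cmp C (F (x V)) (cu V))"
  have a: "cmp C (cp (B V)) (cmp C (F (x (B V))) (F (cu V))) = msc C (-1) (x V)"
  proof -
    have "cmp C (cp (B V)) (cmp C (F (x (B V))) (F (cu V)))
        = cmp C (msc C (-1) (cmp C (cp (B V)) (x (B (B V))))) (F (cu V))"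
      by (simp add: nest[OF r_capdot[of "B V"]])
    also have "\<dots> = msc C (-1) (cmp C (cp (B V)) (cmp C (x (B (B V))) (F (cu V))))" by simp
    also have "cmp C (x (B (B V))) (F (cu V)) = cmp C (F (cu V)) (x V)" using nat_x[of "cu V"] by simp
    also have "cmp C (cp (B V)) (cmp C (F (cu V)) (x V)) = x V" by (simp add: nest[OF r_zz1])
    finally show ?thesis .
  qed
  have b: "cmp C (cp (B V)) (cmp C (F (F (x V))) (F (cu V))) = x V"
  proof -
    have e: "cmp C (cp (B V)) (F (F (x V))) = cmp C (x V) (cp (B V))" using nat_cp[of "x V"] by simp
    have "cmp C (cp (B V)) (cmp C (F (F (x V))) (F (cu V))) = cmp C (x V) (cmp C (cp (B V)) (F (cu V)))"
      using nest[OF e] by simp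
    thus ?thesis by (simp add: r_zz1)
  qed
  have "cmp C (cp (B V)) (F ?p) = madd C (msc C (-1) (x V)) (x V)"
    using a b by simp
  also have "\<dots> = mzero C (B V) (B V)" using add_neg[of "x V"] add_comm[of "x V" "msc C (-1) (x V)"] by simp
  finally have "?p = mzero C V (B (B V))" by (intro gamma_inj) simp_all
  thus ?thesis using add_cancel_neg[of "cmp C (F (x V)) (cu V)" "cmp C (x (B V)) (cu V)"]
    add_comm[of "cmp C (F (x V)) (cu V)" "cmp C (x (B V)) (cu V)"] by simp
qed

lemma mate_zero:
  assumes "arr f" "dm f = B V" "cd f = B V" "cmp C (cp V) (F f) = mzero C (B (B V)) V"
  shows "f = mzero C (B V) (B V)"
proof -
  have "f = cmp C (cmp C (F (cp V)) (cu (B V))) f" using assms by (simp add: r_zz2)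
  also have "\<dots> = cmp C (F (cp V)) (cmp C (cu (B V)) f)" using assms by simp
  also have "cmp C (cu (B V)) f = cmp C (F (F f)) (cu (B V))" using nat_cu[of f] assms by simp
  also have "cmp C (F (cp V)) (cmp C (F (F f)) (cu (B V))) = cmp C (F (cmp C (cp V) (F f))) (cu (B V))"
    using assms(1-3) by simp
  also have "\<dots> = mzero C (B V) (B V)" by (simp only: assms(4)) simp
  finally show ?thesis .
qed

lemma tau_cup: "cmp C (tu V) (cu V) = mzero C V (B (B V))"
proof -
  let ?D = "cmp C (F (cp V)) (cmp C (tu (B V)) (F (cu V)))"
  have "cmp C (cp V) (F ?D) = cmp C (cmp C (cp V) (F (F (cp V)))) (cmp C (F (tu (B V))) (F (F (cu V))))"
    by simp
  also have "cmp C (cp V) (F (F (cp V))) = cmp C (cp V) (cp (B (B V)))" using nat_cp[of "cp V"] by simp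
  also have "cmp C (cmp C (cp V) (cp (B (B V)))) (cmp C (F (tu (B V))) (F (F (cu V))))
     = cmp C (cp V) (cmp C (cmp C (cp (B (B V))) (F (tu (B V)))) (F (F (cu V))))" by simp
  also have "cmp C (cp (B (B V))) (F (tu (B V))) = cmp C (F (cp (B V))) (tu (B (B V)))"
    using r_pitch[of "B V"] by simp
  also have "cmp C (cmp C (F (cp (B V))) (tu (B (B V)))) (F (F (cu V)))
      = cmp C (F (cp (B V))) (cmp C (tu (B (B V))) (F (F (cu V))))" by simp
  also have "cmp C (tu (B (B V))) (F (F (cu V))) = cmp C (F (F (cu V))) (tu V)"
    using nat_tu[of "cu V"] by simp
  also have "cmp C (F (cp (B V))) (cmp C (F (F (cu V))) (tu V)) = tu V"
    by (simp add: nest[OF r_zz1[THEN arg_cong[where f=F], simplified]])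
  also have "cmp C (cp V) (tu V) = mzero C (B (B V)) V" by (rule r_captau)
  finally have D0: "?D = mzero C (B V) (B V)" by (intro mate_zero) simp_all
  have "cmp C (cp (B V)) (F (cmp C (tu V) (cu V))) = ?D"
    by (simp add: nest[OF r_pitch[symmetric]])
  hence "cmp C (cp (B V)) (F (cmp C (tu V) (cu V))) = mzero C (B V) (B V)" using D0 by simp
  thus ?thesis by (intro gamma_inj) simp_all
qed



definition kap :: "'o \<Rightarrow> 'm \<Rightarrow> 'm" where
  "kap V g = cmp C (cp (B V)) (F (cmp C (tu V) (cmp C (F g) (cu V))))"

lemma kap_ty[simp]: "arr g \<Longrightarrow> dm g = B V \<Longrightarrow> cd g = B V \<Longrightarrow>
   arr (kap V g) \<and> dm (kap V g) = B V \<and> cd (kap V g) = B V"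
  unfolding kap_def by simp

lemma gi_lin:
  assumes "arr a" "arr b" "arr h" "dm a = B (B V)" "cd a = B (B V)" "dm b = B (B V)" "cd b = B (B V)"
    "dm h = V" "cd h = B (B V)"
  shows "cmp C (cp (B V)) (F (cmp C (msub C a b) h))
     = madd C (cmp C (cp (B V)) (F (cmp C a h))) (msc C (-1) (cmp C (cp (B V)) (F (cmp C b h))))"
  using assms by (simp add: msub_def)

lemma kappa_rel:
  assumes g: "arr g" "dm g = B V" "cd g = B V"
  shows "madd C (msc C (-1) (cmp C (kap V g) (x V))) (msc C (-1) (kap V (cmp C (x V) g)))
        = madd C g (msc C (-1) (F (cmp C (cp V) (cmp C (F g) (cu V)))))"
proof -
  let ?h = "cmp C (F g) (cu V)"
  have kt: "arr (kap V g)" "dm (kap V g) = B V" "cd (kap V g) = B V" using kap_ty[OF g] by auto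
  have E: "cmp C (cp (B V)) (F (cmp C (msub C (cmp C (x (B V)) (tu V)) (cmp C (tu V) (F (x V)))) ?h))
         = cmp C (cp (B V)) (F (cmp C (msub C (idm C (B (B V))) (cmp C (cu V) (cp V))) ?h))"
    by (simp only: r_dot)
  have L1: "cmp C (cp (B V)) (F (cmp C (cmp C (x (B V)) (tu V)) ?h)) = msc C (-1) (cmp C (kap V g) (x V))"
  proof -
    have th: "cmp C (tu V) ?h = cmp C (F (kap V g)) (cu V)"
      using gamma_inv[of "cmp C (tu V) ?h" V] g unfolding kap_def by simp
    have "cmp C (cmp C (x (B V)) (tu V)) ?h = cmp C (x (B V)) (cmp C (tu V) ?h)" using g by simp
    also have "\<dots> = cmp C (x (B V)) (cmp C (F (kap V g)) (cu V))" by (simp only: th)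
    also have "\<dots> = cmp C (cmp C (x (B V)) (F (kap V g))) (cu V)" using kt by simp
    also have "cmp C (x (B V)) (F (kap V g)) = cmp C (F (kap V g)) (x (B V))"
      using nat_x[of "kap V g"] kt by simp
    also have "cmp C (cmp C (F (kap V g)) (x (B V))) (cu V) = cmp C (F (kap V g)) (cmp C (x (B V)) (cu V))"
      using kt by simp
    also have "\<dots> = msc C (-1) (cmp C (F (cmp C (kap V g) (x V))) (cu V))"
      using kt by (simp add: dot_cup)
    finally have "cmp C (cp (B V)) (F (cmp C (cmp C (x (B V)) (tu V)) ?h))
        = cmp C (cp (B V)) (F (msc C (-1) (cmp C (F (cmp C (kap V g) (x V))) (cu V))))" by simp
    also have "\<dots> = msc C (-1) (cmp C (cp (B V)) (F (cmp C (F (cmp C (kap V g) (x V))) (cu V))))"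
      using kt by simp
    also have "cmp C (cp (B V)) (F (cmp C (F (cmp C (kap V g) (x V))) (cu V))) = cmp C (kap V g) (x V)"
      by (rule gamma_inv2) (simp_all add: kt)
    finally show ?thesis .
  qed
  have L2: "cmp C (cp (B V)) (F (cmp C (cmp C (tu V) (F (x V))) ?h)) = kap V (cmp C (x V) g)"
    unfolding kap_def using g by simp
  have R1: "cmp C (cp (B V)) (F (cmp C (idm C (B (B V))) ?h)) = g"
    using gamma_inv2[OF g] g by simp
  have R2: "cmp C (cp (B V)) (F (cmp C (cmp C (cu V) (cp V)) ?h)) = F (cmp C (cp V) ?h)"
  proof -
    have "cmp C (cp (B V)) (F (cmp C (cmp C (cu V) (cp V)) ?h))
        = cmp C (cmp C (cp (B V)) (F (cu V))) (F (cmp C (cp V) ?h))" using g by simp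
    also have "\<dots> = F (cmp C (cp V) ?h)" using g by (simp only: r_zz1) simp
    finally show ?thesis .
  qed
  have "cmp C (cp (B V)) (F (cmp C (msub C (cmp C (x (B V)) (tu V)) (cmp C (tu V) (F (x V)))) ?h))
       = madd C (msc C (-1) (cmp C (kap V g) (x V))) (msc C (-1) (kap V (cmp C (x V) g)))"
    apply (subst gi_lin)
    apply (simp_all add: g)[9]
    by (simp only: L1 L2)
  moreover have "cmp C (cp (B V)) (F (cmp C (msub C (idm C (B (B V))) (cmp C (cu V) (cp V))) ?h))
       = madd C g (msc C (-1) (F (cmp C (cp V) ?h)))"
    apply (subst gi_lin)
    apply (simp_all add: g)[9]
    by (simp only: R1 R2)
  ultimately show ?thesis using E by simp
qed

end


context LC begin

fun ssum :: "'o \<Rightarrow> 'o \<Rightarrow> (nat \<Rightarrow> 'm) \<Rightarrow> nat \<Rightarrow> 'm" where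
  "ssum a b f 0 = mzero C a b"
| "ssum a b f (Suc n) = madd C (f 0) (ssum a b (\<lambda>i. f (Suc i)) n)"

lemma ssum_ty:
  assumes "\<And>i. i < n \<Longrightarrow> arr (f i) \<and> dm (f i) = a \<and> cd (f i) = b"
  shows "arr (ssum a b f n) \<and> dm (ssum a b f n) = a \<and> cd (ssum a b f n) = b"
  using assms
proof (induction n arbitrary: f)
  case 0 thus ?case by simp
next
  case (Suc n)
  have "arr (ssum a b (\<lambda>i. f (Suc i)) n) \<and> dm (ssum a b (\<lambda>i. f (Suc i)) n) = a \<and> cd (ssum a b (\<lambda>i. f (Suc i)) n) = b"
    using Suc by auto
  moreover have "arr (f 0) \<and> dm (f 0) = a \<and> cd (f 0) = b" using Suc by auto
  ultimately show ?case by simp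
qed

lemma foldr_ssum: "foldr (\<lambda>i acc. madd C (f i) acc) [0..<n] (mzero C a b) = ssum a b f n"
proof (induction n arbitrary: f)
  case 0 thus ?case by simp
next
  case (Suc n)
  have "[0..<Suc n] = 0 # map Suc [0..<n]" by (simp add: upt_conv_Cons map_Suc_upt)
  thus ?case using Suc[of "\<lambda>i. f (Suc i)"] by (simp add: foldr_map o_def)
qed

lemma ssum_all_zero: "(\<And>i. f i = mzero C a b) \<Longrightarrow> ssum a b f N = mzero C a b"
proof (induction N arbitrary: f)
  case 0 thus ?case by simp
next
  case (Suc N)
  have h: "ssum a b (\<lambda>i. f (Suc i)) N = mzero C a b" by (rule Suc.IH) (rule Suc.prems)
  have f0: "f 0 = mzero C a b" by (rule Suc.prems)
  show ?case by (simp only: ssum.simps h f0) simp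
qed

lemma ssum_zero_tail:
  assumes "\<And>i. i \<ge> n \<Longrightarrow> f i = mzero C a b" "n \<le> N"
  shows "ssum a b f N = ssum a b f n"
  using assms
proof (induction n arbitrary: f N)
  case 0
  have "ssum a b f N = mzero C a b" by (rule ssum_all_zero) (use 0 in simp)
  thus ?case by simp
next
  case (Suc n)
  then obtain N' where N: "N = Suc N'" by (cases N) auto
  have "ssum a b (\<lambda>i. f (Suc i)) N' = ssum a b (\<lambda>i. f (Suc i)) n"
  proof (rule Suc.IH)
    show "\<And>i. n \<le> i \<Longrightarrow> f (Suc i) = mzero C a b" using Suc.prems(1) by simp
    show "n \<le> N'" using Suc.prems(2) N by simp
  qed
  thus ?case using N by simp
qed

lemma ssum_cmp:
  assumes "\<And>i. i < n \<Longrightarrow> arr (f i) \<and> dm (f i) = a \<and> cd (f i) = b" "arr g" "dm g = b"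
  shows "cmp C g (ssum a b f n) = ssum a (cd g) (\<lambda>i. cmp C g (f i)) n"
  using assms
proof (induction n arbitrary: f)
  case 0 thus ?case by simp
next
  case (Suc n)
  have IH: "cmp C g (ssum a b (\<lambda>i. f (Suc i)) n) = ssum a (cd g) (\<lambda>i. cmp C g (f (Suc i))) n"
    by (rule Suc.IH) (use Suc.prems in auto)
  have t1: "arr (ssum a b (\<lambda>i. f (Suc i)) n) \<and> dm (ssum a b (\<lambda>i. f (Suc i)) n) = a \<and> cd (ssum a b (\<lambda>i. f (Suc i)) n) = b"
    by (rule ssum_ty) (use Suc.prems in auto)
  have t2: "arr (f 0) \<and> dm (f 0) = a \<and> cd (f 0) = b" using Suc.prems by auto
  show ?case using t1 t2 IH Suc.prems(2,3) by simp
qed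

lemma mpow_ty[simp]: "arr X \<Longrightarrow> dm X = a \<Longrightarrow> cd X = a \<Longrightarrow>
    arr (mpow C a X n) \<and> dm (mpow C a X n) = a \<and> cd (mpow C a X n) = a"
  by (induction n) auto

lemma peval_ssum:
  assumes X: "arr X" "dm X = a" "cd X = a" and N: "degree p < N"
  shows "peval C a p X = ssum a a (\<lambda>i. msc C (coeff p i) (mpow C a X i)) N"
proof -
  have "peval C a p X = foldr (\<lambda>i acc. madd C (msc C (coeff p i) (mpow C a X i)) acc) [0..<Suc (degree p)] (mzero C a a)"
    unfolding peval_def lincomb_def by (simp add: foldr_map o_def)
  also have "\<dots> = ssum a a (\<lambda>i. msc C (coeff p i) (mpow C a X i)) (Suc (degree p))" by (rule foldr_ssum)
  also have "\<dots> = ssum a a (\<lambda>i. msc C (coeff p i) (mpow C a X i)) N"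
    by (rule ssum_zero_tail[symmetric]) (use X N in \<open>simp_all add: coeff_eq_0\<close>)
  finally show ?thesis .
qed

lemma add_swap4:
  assumes "arr A" "arr B'" "arr C'" "arr D"
    "dm B' = dm A" "cd B' = cd A" "dm C' = dm A" "cd C' = cd A" "dm D = dm A" "cd D = cd A"
  shows "madd C (madd C A B') (madd C C' D) = madd C (madd C A C') (madd C B' D)"
  using assms add_lcomm[of B' C' D] by simp

end

locale LCX = LC C for C :: "('o, 'm, 'k::field) lincat" +
  fixes a :: 'o and X :: 'm
  assumes X: "arr X" "dm X = a" "cd X = a"
begin

abbreviation "E p \<equiv> peval C a p X"

lemma X_simps[simp]: "arr X" "dm X = a" "cd X = a" using X by auto

lemma E_horner: "E (pCons c p) = madd C (msc C c (idm C a)) (cmp C X (E p))"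
proof -
  have d: "degree (pCons c p) < Suc (Suc (degree p))" using degree_pCons_le[of c p] by simp
  have "E (pCons c p) = ssum a a (\<lambda>i. msc C (coeff (pCons c p) i) (mpow C a X i)) (Suc (Suc (degree p)))"
    by (rule peval_ssum[OF X d])
  also have "\<dots> = madd C (msc C c (idm C a)) (ssum a a (\<lambda>i. msc C (coeff p i) (cmp C X (mpow C a X i))) (Suc (degree p)))"
    by simp
  also have "ssum a a (\<lambda>i. msc C (coeff p i) (cmp C X (mpow C a X i))) (Suc (degree p))
      = ssum a a (\<lambda>i. cmp C X (msc C (coeff p i) (mpow C a X i))) (Suc (degree p))"
    by simp
  also have "\<dots> = cmp C X (ssum a a (\<lambda>i. msc C (coeff p i) (mpow C a X i)) (Suc (degree p)))"
    using ssum_cmp[of "Suc (degree p)" "\<lambda>i. msc C (coeff p i) (mpow C a X i)" a a X] by simp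
  also have "ssum a a (\<lambda>i. msc C (coeff p i) (mpow C a X i)) (Suc (degree p)) = E p"
    by (rule peval_ssum[OF X, symmetric]) simp
  finally show ?thesis .
qed

lemma E_0[simp]: "E 0 = mzero C a a"
  using peval_ssum[OF X, of 0 1] by simp

lemma E_ty[simp]: "arr (E p)" "dm (E p) = a" "cd (E p) = a"
proof -
  have "arr (E p) \<and> dm (E p) = a \<and> cd (E p) = a"
  proof (induction p)
    case 0 thus ?case by simp
  next
    case (pCons c p)
    thus ?case by (simp add: E_horner)
  qed
  thus "arr (E p)" "dm (E p) = a" "cd (E p) = a" by auto
qed

lemma E_const[simp]: "E [:c:] = msc C c (idm C a)"
  using E_horner[of c 0] by simp

lemma E_add: "E (p + q) = madd C (E p) (E q)"
proof (induction p arbitrary: q)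
  case 0 thus ?case by simp
next
  case (pCons c p)
  obtain d q' where q: "q = pCons d q'" by (cases q)
  have "E (pCons c p + q) = madd C (msc C (c + d) (idm C a)) (cmp C X (E (p + q')))"
    using q E_horner by simp
  also have "\<dots> = madd C (madd C (msc C c (idm C a)) (msc C d (idm C a)))
                       (madd C (cmp C X (E p)) (cmp C X (E q')))"
    using pCons.IH[of q'] by simp
  also have "\<dots> = madd C (madd C (msc C c (idm C a)) (cmp C X (E p)))
                       (madd C (msc C d (idm C a)) (cmp C X (E q')))"
    by (rule add_swap4) auto
  also have "\<dots> = madd C (E (pCons c p)) (E q)" using q E_horner by simp
  finally show ?case .
qed

lemma E_smult: "E (Polynomial.smult c p) = msc C c (E p)"
proof (induction p)
  case 0 thus ?case by simp
next
  case (pCons d p)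
  thus ?case by (simp add: E_horner)
qed

lemma E_x: "E (pCons 0 p) = cmp C X (E p)"
  using E_horner[of 0 p] by simp

lemma E_mult: "E (p * q) = cmp C (E p) (E q)"
proof (induction p)
  case 0 thus ?case by simp
next
  case (pCons c p)
  have "E (pCons c p * q) = madd C (msc C c (E q)) (cmp C X (E (p * q)))"
    by (simp add: E_add E_smult E_x)
  also have "\<dots> = cmp C (E (pCons c p)) (E q)" using pCons.IH by (simp add: E_horner)
  finally show ?case .
qed

lemma E_comm: "cmp C (E p) X = cmp C X (E p)"
proof -
  have "cmp C X (E p) = E (pCons 0 p)" by (simp add: E_x)
  also have "pCons 0 p = p * [:0, 1:]" by simp
  also have "E (p * [:0, 1:]) = cmp C (E p) (E [:0, 1:])" by (rule E_mult)
  also have "E [:0, 1:] = X" by (simp add: E_x)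
  finally show ?thesis by simp
qed

lemma E_monom: "E (monom c n) = msc C c (mpow C a X n)"
proof (induction n)
  case 0 thus ?case by (simp add: monom_0)
next
  case (Suc n)
  thus ?case by (simp add: monom_Suc E_x)
qed

lemma E_neg: "E (- p) = msc C (-1) (E p)"
  using E_smult[of "-1" p] by simp

lemma E_diff: "E (p - q) = madd C (E p) (msc C (-1) (E q))"
  using E_add[of p "-q"] E_neg by simp

end


context LC begin

lemma lc_ty:
  assumes "set bs \<subseteq> Hom C a a"
  shows "arr (lincomb C a a (zip cs bs)) \<and> dm (lincomb C a a (zip cs bs)) = a \<and> cd (lincomb C a a (zip cs bs)) = a"
  using assms
proof (induction bs arbitrary: cs)
  case Nil thus ?case by (simp add: lincomb_def)
next
  case (Cons b bs)
  show ?case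
  proof (cases cs)
    case Nil thus ?thesis by (simp add: lincomb_def)
  next
    case (Cons c cs')
    have IH: "arr (lincomb C a a (zip cs' bs)) \<and> dm (lincomb C a a (zip cs' bs)) = a \<and> cd (lincomb C a a (zip cs' bs)) = a"
      using Cons.IH[of cs'] Cons.prems by simp
    have b: "arr b \<and> dm b = a \<and> cd b = a" using Cons.prems in_hom_iff by auto
    show ?thesis using IH b Cons unfolding lincomb_def by simp
  qed
qed

lemma lc_cons: "lincomb C a a ((c, b) # ps) = madd C (msc C c b) (lincomb C a a ps)"
  by (simp add: lincomb_def)

lemma lc_add:
  assumes "length xs = length bs" "set bs \<subseteq> Hom C a a"
  shows "lincomb C a a (zip (map (\<lambda>r. f r + g r) xs) bs)
       = madd C (lincomb C a a (zip (map f xs) bs)) (lincomb C a a (zip (map g xs) bs))"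
  using assms
proof (induction bs arbitrary: xs)
  case Nil thus ?case by (simp add: lincomb_def)
next
  case (Cons b bs)
  then obtain y ys where xs: "xs = y # ys" by (cases xs) auto
  have b: "arr b \<and> dm b = a \<and> cd b = a" using Cons.prems in_hom_iff by auto
  have IH: "lincomb C a a (zip (map (\<lambda>r. f r + g r) ys) bs)
       = madd C (lincomb C a a (zip (map f ys) bs)) (lincomb C a a (zip (map g ys) bs))"
    using Cons.IH[of ys] Cons.prems xs by simp
  have t1: "arr (lincomb C a a (zip (map f ys) bs)) \<and> dm (lincomb C a a (zip (map f ys) bs)) = a \<and> cd (lincomb C a a (zip (map f ys) bs)) = a"
    using lc_ty Cons.prems by auto
  have t2: "arr (lincomb C a a (zip (map g ys) bs)) \<and> dm (lincomb C a a (zip (map g ys) bs)) = a \<and> cd (lincomb C a a (zip (map g ys) bs)) = a"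
    using lc_ty Cons.prems by auto
  have "lincomb C a a (zip (map (\<lambda>r. f r + g r) xs) (b # bs))
     = madd C (madd C (msc C (f y) b) (msc C (g y) b))
              (madd C (lincomb C a a (zip (map f ys) bs)) (lincomb C a a (zip (map g ys) bs)))"
    using xs IH b by (simp add: lc_cons)
  also have "\<dots> = madd C (madd C (msc C (f y) b) (lincomb C a a (zip (map f ys) bs)))
              (madd C (msc C (g y) b) (lincomb C a a (zip (map g ys) bs)))"
    by (rule add_swap4) (use b t1 t2 in auto)
  also have "\<dots> = madd C (lincomb C a a (zip (map f xs) (b # bs))) (lincomb C a a (zip (map g xs) (b # bs)))"
    using xs by (simp add: lc_cons)
  finally show ?case .
qed

lemma lc_sc:
  assumes "length xs = length bs" "set bs \<subseteq> Hom C a a"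
  shows "lincomb C a a (zip (map (\<lambda>r. c * f r) xs) bs) = msc C c (lincomb C a a (zip (map f xs) bs))"
  using assms
proof (induction bs arbitrary: xs)
  case Nil thus ?case by (simp add: lincomb_def)
next
  case (Cons b bs)
  then obtain y ys where xs: "xs = y # ys" by (cases xs) auto
  have b: "arr b \<and> dm b = a \<and> cd b = a" using Cons.prems in_hom_iff by auto
  have IH: "lincomb C a a (zip (map (\<lambda>r. c * f r) ys) bs) = msc C c (lincomb C a a (zip (map f ys) bs))"
    using Cons.IH[of ys] Cons.prems xs by simp
  have t1: "arr (lincomb C a a (zip (map f ys) bs)) \<and> dm (lincomb C a a (zip (map f ys) bs)) = a \<and> cd (lincomb C a a (zip (map f ys) bs)) = a"
    using lc_ty Cons.prems by auto
  show ?case using xs IH b t1 by (simp add: lc_cons)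
qed

lemma lc_zero:
  assumes "set bs \<subseteq> Hom C a a"
  shows "lincomb C a a (zip (map (\<lambda>r. 0) xs) bs) = mzero C a a"
  using assms
proof (induction bs arbitrary: xs)
  case Nil thus ?case by (simp add: lincomb_def)
next
  case (Cons b bs)
  have b: "arr b \<and> dm b = a \<and> cd b = a" using Cons.prems in_hom_iff by auto
  show ?case
  proof (cases xs)
    case Nil thus ?thesis by (simp add: lincomb_def)
  next
    case (Cons y ys)
    thus ?thesis using Cons.IH[of ys] Cons.prems b by (simp add: lc_cons)
  qed
qed

end

context LCX begin

lemma ann_exists:
  assumes fd: "findim_hom C a a"
  shows "\<exists>p. p \<noteq> 0 \<and> E p = mzero C a a"
proof -
  obtain bs where bs: "set bs \<subseteq> Hom C a a"
    and sp: "\<And>f. f \<in> Hom C a a \<Longrightarrow> \<exists>cs. length cs = length bs \<and> f = lincomb C a a (zip cs bs)"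
    using fd unfolding findim_hom_def by blast
  define N where "N = length bs"
  define cs where "cs = (\<lambda>i. SOME cs. length cs = N \<and> mpow C a X i = lincomb C a a (zip cs bs))"
  have cs: "length (cs i) = N \<and> mpow C a X i = lincomb C a a (zip (cs i) bs)" for i
  proof -
    have "mpow C a X i \<in> Hom C a a" using in_hom_iff by simp
    hence "\<exists>c. length c = N \<and> mpow C a X i = lincomb C a a (zip c bs)" using sp N_def by blast
    thus ?thesis unfolding cs_def by (rule someI_ex)
  qed
  have cs': "mpow C a X i = lincomb C a a (zip (map (\<lambda>r. cs i ! r) [0..<N]) bs)" for i
  proof -
    have l: "length (cs i) = N" using cs[of i] by simp
    have "map (\<lambda>r. cs i ! r) [0..<N] = cs i" using map_nth[of "cs i"] unfolding l .
    thus ?thesis using cs[of i] by simp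
  qed
  have sumE: "finite I \<Longrightarrow> E (\<Sum>i\<in>I. monom (v i) i) = lincomb C a a (zip (map (\<lambda>r. \<Sum>i\<in>I. v i * cs i ! r) [0..<N]) bs)" for I v
  proof (induction I rule: finite_induct)
    case empty thus ?case using lc_zero[OF bs, of "[0..<N]"] by simp
  next
    case (insert j I)
    have "E (\<Sum>i\<in>insert j I. monom (v i) i) = madd C (E (monom (v j) j)) (E (\<Sum>i\<in>I. monom (v i) i))"
      using insert by (simp add: E_add)
    also have "E (monom (v j) j) = lincomb C a a (zip (map (\<lambda>r. v j * (cs j ! r)) [0..<N]) bs)"
      using E_monom cs'[of j] lc_sc[OF _ bs, of "[0..<N]" "v j" "\<lambda>r. cs j ! r"] N_def by simp
    also have "madd C \<dots> (E (\<Sum>i\<in>I. monom (v i) i))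
        = lincomb C a a (zip (map (\<lambda>r. v j * (cs j ! r) + (\<Sum>i\<in>I. v i * cs i ! r)) [0..<N]) bs)"
      using insert.IH lc_add[OF _ bs, of "[0..<N]" "\<lambda>r. v j * (cs j ! r)" "\<lambda>r. \<Sum>i\<in>I. v i * cs i ! r"] N_def
      by simp
    finally show ?case using insert by simp
  qed
  define A :: "'k mat" where "A = mat\<^sub>r (Suc N) (Suc N) (\<lambda>r. if r = N then 0\<^sub>v (Suc N) else vec (Suc N) (\<lambda>i. cs i ! r))"
  have A: "A \<in> carrier_mat (Suc N) (Suc N)" unfolding A_def by simp
  have "det A = 0" unfolding A_def by (rule det_row_0) auto
  then obtain v where v: "v \<in> carrier_vec (Suc N)" "v \<noteq> 0\<^sub>v (Suc N)" "A *\<^sub>v v = 0\<^sub>v (Suc N)"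
    using det_0_iff_vec_prod_zero_field[OF A] by blast
  define p where "p = (\<Sum>i\<in>{..<Suc N}. monom (v $ i) i)"
  have coeffp: "coeff p j = (if j < Suc N then v $ j else 0)" for j
    unfolding p_def by (simp add: coeff_sum coeff_monom)
  have "p \<noteq> 0"
  proof
    assume "p = 0"
    hence "v $ j = 0" if "j < Suc N" for j using coeffp[of j] that by simp
    hence "v = 0\<^sub>v (Suc N)" using v(1) by (intro eq_vecI) auto
    thus False using v(2) by simp
  qed
  moreover have "E p = mzero C a a"
  proof -
    have z: "(\<Sum>i\<in>{..<Suc N}. v $ i * cs i ! r) = 0" if "r < N" for r
    proof -
      have "(A *\<^sub>v v) $ r = 0" using v(3) that by simp
      moreover have "(A *\<^sub>v v) $ r = (\<Sum>i\<in>{..<Suc N}. v $ i * cs i ! r)"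
        using that v(1) unfolding A_def
        by (simp add: scalar_prod_def lessThan_atLeast0 mult.commute)
      ultimately show ?thesis by simp
    qed
    have "E p = lincomb C a a (zip (map (\<lambda>r. \<Sum>i\<in>{..<Suc N}. v $ i * cs i ! r) [0..<N]) bs)"
      unfolding p_def by (rule sumE) simp
    also have "map (\<lambda>r. \<Sum>i\<in>{..<Suc N}. v $ i * cs i ! r) [0..<N] = map (\<lambda>r. 0) [0..<N]"
      using z by simp
    also have "lincomb C a a (zip \<dots> bs) = mzero C a a" by (rule lc_zero[OF bs])
    finally show ?thesis .
  qed
  ultimately show ?thesis by blast
qed

end


context LC begin
lemma solve_lin:
  assumes "arr A" "arr K" "dm K = dm A" "cd K = cd A" "madd C A (msc C (-1) K) = R"
  shows "K = madd C A (msc C (-1) R)"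
proof -
  have "madd C A (msc C (-1) R) = madd C A (msc C (-1) (madd C A (msc C (-1) K)))"
    using assms(5) by simp
  also have "\<dots> = madd C A (madd C (msc C (-1) A) K)"
    using assms(1-4) by simp
  also have "\<dots> = madd C (madd C A (msc C (-1) A)) K" using assms by simp
  also have "\<dots> = K" using assms add_neg[of A] by simp
  finally show ?thesis by simp
qed
end

context LCX begin

definition "mpP p \<longleftrightarrow> lead_coeff p = 1 \<and> E p = mzero C a a \<and>
      (\<forall>q. q \<noteq> 0 \<and> E q = mzero C a a \<longrightarrow> degree p \<le> degree q)"

lemma minpoly_char:
  assumes fd: "findim_hom C a a"
  shows "lead_coeff (minpoly C a X) = 1" "E (minpoly C a X) = mzero C a a"
    "\<And>q. q \<noteq> 0 \<Longrightarrow> E q = mzero C a a \<Longrightarrow> degree (minpoly C a X) \<le> degree q"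
proof -
  define d where "d = (LEAST n. \<exists>p. p \<noteq> 0 \<and> E p = mzero C a a \<and> degree p = n)"
  have ex: "\<exists>n p. p \<noteq> 0 \<and> E p = mzero C a a \<and> degree p = n" using ann_exists[OF fd] by blast
  obtain p0 where p0: "p0 \<noteq> 0" "E p0 = mzero C a a" "degree p0 = d"
    using LeastI_ex[OF ex] unfolding d_def by blast
  have dmin: "d \<le> degree q" if "q \<noteq> 0" "E q = mzero C a a" for q
    unfolding d_def by (rule Least_le) (use that in blast)
  define m0 where "m0 = Polynomial.smult (inverse (lead_coeff p0)) p0"
  have lc0: "lead_coeff p0 \<noteq> 0" using p0(1) by simp
  have m0: "lead_coeff m0 = 1" "E m0 = mzero C a a" "degree m0 = d" "m0 \<noteq> 0"
    unfolding m0_def using p0 lc0 by (auto simp: E_smult)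
  have P0: "mpP m0" unfolding mpP_def using m0 dmin by auto
  have uniq: "p = m0" if P: "mpP p" for p
  proof -
    have p: "lead_coeff p = 1" "E p = mzero C a a" "p \<noteq> 0" using P unfolding mpP_def by auto
    have "degree p \<le> degree m0" using P m0(2,4) unfolding mpP_def by blast
    hence "degree p \<le> d" using m0(3) by simp
    moreover have "d \<le> degree p" using dmin p by blast
    ultimately have dp: "degree p = d" by simp
    show "p = m0"
    proof (rule ccontr)
      assume ne: "p \<noteq> m0"
      hence r0: "p - m0 \<noteq> 0" by simp
      have "E (p - m0) = mzero C a a" using p m0 by (simp add: E_diff)
      hence "d \<le> degree (p - m0)" using dmin r0 by blast
      moreover have "degree (p - m0) \<le> d" using degree_diff_le[of p d m0] dp m0 by simp
      ultimately have "degree (p - m0) = d" by simp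
      moreover have "coeff (p - m0) d = 0" using p m0 dp by simp
      ultimately have "lead_coeff (p - m0) = 0" by simp
      thus False using r0 leading_coeff_0_iff[of "p - m0"] by blast
    qed
  qed
  have "minpoly C a X = (THE p. mpP p)" unfolding minpoly_def mpP_def ..
  also have "\<dots> = m0" by (rule the_equality[where P=mpP, OF P0 uniq])
  finally have "minpoly C a X = m0" .
  thus "lead_coeff (minpoly C a X) = 1" "E (minpoly C a X) = mzero C a a"
    "\<And>q. q \<noteq> 0 \<Longrightarrow> E q = mzero C a a \<Longrightarrow> degree (minpoly C a X) \<le> degree q"
    using P0 unfolding mpP_def by auto
qed

end


lemma key_lemma:
  fixes c b :: "nat \<Rightarrow> 'k::field" and d k :: nat
  assumes A: "\<And>a. (\<Sum>j\<le>d. c j * (if a < j then (-1)^a * b (j - 1 - a) - (if a = j - 1 \<and> odd j then 1 else 0) else 0)) = 0"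
    and T: "\<And>s. (\<Sum>j\<le>d. c j * b (j + s)) = 0"
  shows "(\<Sum>i=0..k. b i * (if k - i > d then 0 else c (d - (k - i)))) = (if k \<le> d \<and> odd (d - k) then c (d - k) else 0)"
proof (cases "k < d")
  case True
  define a where "a = d - k - 1"
  have d: "d = a + 1 + k" using True a_def by simp
  have lhs: "(\<Sum>i=0..k. b i * (if k - i > d then 0 else c (d - (k - i)))) = (\<Sum>i=0..k. c (a + 1 + i) * b i)"
    by (rule sum.cong) (auto simp: d algebra_simps)
  let ?F = "\<lambda>j. c j * (if a < j then (-1)^a * b (j - 1 - a) - (if a = j - 1 \<and> odd j then 1 else 0) else 0)"
  have split: "{..d} = {..a} \<union> {a+1..d}" using d by auto
  have "(\<Sum>j\<le>d. ?F j) = (\<Sum>j\<in>{..a}. ?F j) + (\<Sum>j\<in>{a+1..d}. ?F j)"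
    unfolding split by (rule sum.union_disjoint) auto
  also have "(\<Sum>j\<in>{..a}. ?F j) = 0" by (rule sum.neutral) auto
  also have "(\<Sum>j\<in>{a+1..d}. ?F j) = (\<Sum>i=0..k. ?F (i + (a + 1)))"
    using sum.shift_bounds_cl_nat_ivl[of ?F 0 "a+1" k] d by (simp add: add.commute)
  also have "\<dots> = (\<Sum>i=0..k. (-1)^a * (c (a + 1 + i) * b i) - (if i = 0 \<and> odd (a + 1) then c (a + 1) else 0))"
    by (rule sum.cong) (auto simp: algebra_simps)
  also have "\<dots> = (-1)^a * (\<Sum>i=0..k. c (a + 1 + i) * b i) - (\<Sum>i=0..k. (if i = 0 \<and> odd (a + 1) then c (a + 1) else 0))"
    by (simp add: sum_subtractf sum_distrib_left)
  also have "(\<Sum>i=0..k. (if i = 0 \<and> odd (a + 1) then c (a + 1) else 0)) = (if odd (a + 1) then c (a + 1) else 0)"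
    by (simp add: sum.delta)
  finally have e: "(-1)^a * (\<Sum>i=0..k. c (a + 1 + i) * b i) = (if odd (a + 1) then c (a + 1) else 0)"
    using A[of a] by simp
  have dk: "d - k = a + 1" using d by simp
  show ?thesis
  proof (cases "odd (a + 1)")
    case True
    hence "even a" by simp
    hence "(-1::'k)^a = 1" by simp
    thus ?thesis using e True lhs dk \<open>k < d\<close> by simp
  next
    case False
    hence "(\<Sum>i=0..k. c (a + 1 + i) * b i) = 0" using e by simp
    thus ?thesis using False lhs dk by simp
  qed
next
  case False
  define s where "s = k - d"
  have k: "k = s + d" using False s_def by simp
  have split: "{0..k} = {0..<s} \<union> {s..s+d}" using k by auto
  let ?G = "\<lambda>i. b i * (if k - i > d then 0 else c (d - (k - i)))"
  have "(\<Sum>i=0..k. ?G i) = (\<Sum>i\<in>{0..<s}. ?G i) + (\<Sum>i\<in>{s..s+d}. ?G i)"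
    unfolding split by (rule sum.union_disjoint) auto
  also have "(\<Sum>i\<in>{0..<s}. ?G i) = 0" by (rule sum.neutral) (auto simp: k)
  also have "(\<Sum>i\<in>{s..s+d}. ?G i) = (\<Sum>j=0..d. ?G (j + s))"
    using sum.shift_bounds_cl_nat_ivl[of ?G 0 s d] by (simp add: add.commute)
  also have "\<dots> = (\<Sum>j\<le>d. c j * b (j + s))"
    unfolding atMost_atLeast0 by (rule sum.cong) (auto simp: k algebra_simps)
  also have "\<dots> = 0" by (rule T)
  finally show ?thesis using False by auto
qed


lemma coeff_pcomp_neg: "coeff (pcompose p [:0, -1:]) i = (-1)^i * coeff (p :: 'k::field poly) i"
proof (induction p arbitrary: i)
  case 0 thus ?case by simp
next
  case (pCons a p)
  have "pcompose (pCons a p) [:0, -1:] = pCons a (- pcompose p [:0, -1:])"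
    by (simp add: pcompose_pCons)
  thus ?case using pCons by (cases i) (auto simp: coeff_pCons)
qed

lemma fps_final:
  fixes m :: "'k::field poly" and b :: "nat \<Rightarrow> 'k"
  assumes lc: "lead_coeff m = 1"
    and key: "\<And>k. (\<Sum>i=0..k. b i * (if k - i > degree m then 0 else coeff m (degree m - (k - i))))
            = (if k \<le> degree m \<and> odd (degree m - k) then coeff m (degree m - k) else 0)"
  shows "1 - 2 * Abs_fps b = ratio_at_infty m"
proof -
  define d where "d = degree m"
  define D where "D = fps_of_poly (reflect_poly m)"
  define A where "A = fps_of_poly (reflect_poly (pcompose m [:0, -1:]))"
  have dA: "degree (pcompose m [:0, -1:]) = d" unfolding d_def by (simp add: degree_pcompose)
  have Dn: "D $ j = (if j > d then 0 else coeff m (d - j))" for j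
    unfolding D_def d_def by (simp add: coeff_reflect_poly)
  have An: "A $ j = (if j > d then 0 else (-1)^(d - j) * coeff m (d - j))" for j
    unfolding A_def using dA by (simp add: coeff_reflect_poly coeff_pcomp_neg)
  have D0: "D $ 0 \<noteq> 0" using Dn[of 0] lc d_def by simp
  have prod: "(1 - 2 * Abs_fps b) * D = A"
  proof (rule fps_ext)
    fix k
    have c: "(1 - 2 * Abs_fps b) $ i = (if i = 0 then 1 else 0) - 2 * b i" for i
      by (simp add: numeral_fps_const)
    have "((1 - 2 * Abs_fps b) * D) $ k = (\<Sum>i=0..k. ((if i = 0 then 1 else 0) - 2 * b i) * D $ (k - i))"
      unfolding fps_mult_nth c ..
    also have "\<dots> = (\<Sum>i=0..k. (if i = 0 then D $ (k - i) else 0) - 2 * (b i * D $ (k - i)))"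
      by (rule sum.cong) (auto simp: algebra_simps)
    also have "\<dots> = (\<Sum>i=0..k. (if i = 0 then D $ (k - i) else 0)) - 2 * (\<Sum>i=0..k. b i * D $ (k - i))"
      by (simp only: sum_subtractf sum_distrib_left)
    also have "(\<Sum>i=0..k. (if i = 0 then D $ (k - i) else 0)) = D $ k" by (simp add: sum.delta)
    also have "(\<Sum>i=0..k. b i * D $ (k - i)) = (if k \<le> d \<and> odd (d - k) then coeff m (d - k) else 0)"
      using key[of k] unfolding Dn d_def by simp
    finally show "((1 - 2 * Abs_fps b) * D) $ k = A $ k"
      unfolding An Dn by (auto simp: minus_one_power_iff)
  qed
  have "ratio_at_infty m = A / D" unfolding ratio_at_infty_def A_def D_def ..
  also have "\<dots> = A * inverse D" by (rule fps_divide_unit[OF D0])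
  also have "\<dots> = (1 - 2 * Abs_fps b) * (D * inverse D)" unfolding prod[symmetric] by (simp add: mult.assoc)
  also have "D * inverse D = 1" by (rule inverse_mult_eq_1'[OF D0])
  finally show ?thesis by simp
qed


locale NBL = NB C t M for C :: "('o, 'm, 'k::field) lincat" and t M +
  fixes L :: 'o
  assumes sp: "special C M L"

sublocale NBL \<subseteq> LX: LCX C "Bo M L" "xx M L"
  by unfold_locales simp_all

context NBL begin

lemma homLL: "Hom C L L = {msc C c (idm C L) | c. True}" using sp unfolding special_def by blast
lemma idL: "idm C L \<noteq> mzero C L L" using sp unfolding special_def by blast
lemma fdBL: "findim_hom C (B L) (B L)" using sp unfolding special_def by blast

definition scal :: "'m \<Rightarrow> 'k" where "scal f = (THE c. f = msc C c (idm C L))"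

lemma msc_id_inj: "msc C c (idm C L) = msc C d (idm C L) \<Longrightarrow> c = d"
  using sc_inj[of "idm C L" c d] idL by simp

lemma scal_sc[simp]: "scal (msc C c (idm C L)) = c"
  unfolding scal_def by (rule the_equality) (auto dest: msc_id_inj)

lemma scal_eq: "arr f \<Longrightarrow> dm f = L \<Longrightarrow> cd f = L \<Longrightarrow> f = msc C (scal f) (idm C L)"
proof -
  assume "arr f" "dm f = L" "cd f = L"
  hence "f \<in> Hom C L L" using in_hom_iff by blast
  then obtain c where "f = msc C c (idm C L)" using homLL by blast
  thus ?thesis by simp
qed

lemma scal_zero[simp]: "scal (mzero C L L) = 0"
proof -
  have "mzero C L L = msc C 0 (idm C L)" by simp
  thus ?thesis by (metis scal_sc)
qed

lemma scal_add: "arr f \<Longrightarrow> dm f = L \<Longrightarrow> cd f = L \<Longrightarrow> arr g \<Longrightarrow> dm g = L \<Longrightarrow> cd g = L \<Longrightarrow>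
    scal (madd C f g) = scal f + scal g"
proof -
  assume f: "arr f" "dm f = L" "cd f = L" and g: "arr g" "dm g = L" "cd g = L"
  have "madd C f g = madd C (msc C (scal f) (idm C L)) (msc C (scal g) (idm C L))"
    using scal_eq[OF f] scal_eq[OF g] by simp
  also have "\<dots> = msc C (scal f + scal g) (idm C L)" by simp
  finally show ?thesis by simp
qed

lemma scal_msc: "arr f \<Longrightarrow> dm f = L \<Longrightarrow> cd f = L \<Longrightarrow> scal (msc C c f) = c * scal f"
proof -
  assume f: "arr f" "dm f = L" "cd f = L"
  have "msc C c f = msc C c (msc C (scal f) (idm C L))" using scal_eq[OF f] by simp
  also have "\<dots> = msc C (c * scal f) (idm C L)" by simp
  finally show ?thesis by simp
qed

definition sfun :: "'m \<Rightarrow> 'm" where "sfun g = cmp C (cp L) (cmp C (F g) (cu L))"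

lemma sfun_ty[simp]: "arr g \<Longrightarrow> dm g = B L \<Longrightarrow> cd g = B L \<Longrightarrow>
    arr (sfun g) \<and> dm (sfun g) = L \<and> cd (sfun g) = L"
  unfolding sfun_def by simp

abbreviation "bb \<equiv> bubble C M L"

lemma bb_def': "bb r = scal (sfun (mpow C (B L) (x L) r))"
  unfolding bubble_def scal_def sfun_def by (simp add: eq_commute)

definition tr :: "'k poly \<Rightarrow> 'k" where "tr p = scal (sfun (LX.E p))"

lemma tr_add: "tr (p + q) = tr p + tr q"
proof -
  have "sfun (LX.E (p + q)) = madd C (sfun (LX.E p)) (sfun (LX.E q))"
    unfolding sfun_def by (simp add: LX.E_add)
  thus ?thesis unfolding tr_def using scal_add[of "sfun (LX.E p)" "sfun (LX.E q)"] sfun_ty by simp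
qed

lemma tr_0[simp]: "tr 0 = 0" unfolding tr_def sfun_def by simp

lemma tr_monom: "tr (monom c n) = c * bb n"
proof -
  have "sfun (LX.E (monom c n)) = msc C c (sfun (mpow C (B L) (x L) n))"
    unfolding sfun_def by (simp add: LX.E_monom)
  thus ?thesis unfolding tr_def bb_def' using scal_msc sfun_ty by simp
qed

lemma tr_sum: "finite I \<Longrightarrow> tr (\<Sum>i\<in>I. f i) = (\<Sum>i\<in>I. tr (f i))"
  by (induction I rule: finite_induct) (simp_all add: tr_add)

lemma kap_add: "arr g \<Longrightarrow> dm g = B L \<Longrightarrow> cd g = B L \<Longrightarrow> arr h \<Longrightarrow> dm h = B L \<Longrightarrow> cd h = B L \<Longrightarrow>
   kap L (madd C g h) = madd C (kap L g) (kap L h)"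
  unfolding kap_def by simp
lemma kap_sc: "arr g \<Longrightarrow> dm g = B L \<Longrightarrow> cd g = B L \<Longrightarrow> kap L (msc C c g) = msc C c (kap L g)"
  unfolding kap_def by simp
lemma kap_zero: "kap L (mzero C (B L) (B L)) = mzero C (B L) (B L)"
  unfolding kap_def by simp

primrec qq :: "nat \<Rightarrow> 'k poly" where
  "qq 0 = 0"
| "qq (Suc n) = - pCons 0 (qq n) - (monom 1 n - [:bb n:])"

lemma kq: "kap L (mpow C (B L) (x L) n) = LX.E (qq n)"
proof (induction n)
  case 0
  show ?case unfolding kap_def by (simp add: tau_cup)
next
  case (Suc n)
  let ?g = "mpow C (B L) (x L) n"
  have gt: "arr ?g" "dm ?g = B L" "cd ?g = B L" using mpow_ty[of "x L" "B L" n] by auto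
  have rel: "madd C (msc C (-1) (cmp C (kap L ?g) (x L))) (msc C (-1) (kap L (cmp C (x L) ?g)))
        = madd C ?g (msc C (-1) (F (sfun ?g)))"
    using kappa_rel[OF gt] unfolding sfun_def .
  have "F (sfun ?g) = msc C (bb n) (idm C (B L))"
  proof -
    have "sfun ?g = msc C (bb n) (idm C L)" using scal_eq[of "sfun ?g"] sfun_ty[OF gt] bb_def' by simp
    thus ?thesis by simp
  qed
  hence rel': "madd C (msc C (-1) (cmp C (LX.E (qq n)) (x L))) (msc C (-1) (kap L (mpow C (B L) (x L) (Suc n))))
        = madd C ?g (msc C (-1) (msc C (bb n) (idm C (B L))))"
    using rel Suc.IH by simp
  have K: "kap L (mpow C (B L) (x L) (Suc n))
      = madd C (msc C (-1) (cmp C (LX.E (qq n)) (x L))) (msc C (-1) (madd C ?g (msc C (-1) (msc C (bb n) (idm C (B L))))))"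
    by (rule solve_lin[OF _ _ _ _ rel']) (use kap_ty[of "mpow C (B L) (x L) (Suc n)" L] mpow_ty[of "x L" "B L" "Suc n"] in auto)
  have "LX.E (qq (Suc n)) = madd C (msc C (-1) (cmp C (x L) (LX.E (qq n))))
          (msc C (-1) (madd C ?g (msc C (-1) (msc C (bb n) (idm C (B L))))))"
    by (simp only: qq.simps LX.E_diff LX.E_neg LX.E_x LX.E_monom LX.E_const) simp
  also have "cmp C (x L) (LX.E (qq n)) = cmp C (LX.E (qq n)) (x L)" by (rule LX.E_comm[symmetric])
  finally show ?case using K by simp
qed


lemma degq: "degree (qq n) \<le> n - 1" and qq0: "qq 0 = 0"
proof -
  show "qq 0 = 0" by simp
  show "degree (qq n) \<le> n - 1"
  proof (induction n)
    case 0 thus ?case by simp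
  next
    case (Suc n)
    have a: "degree (- pCons 0 (qq n)) \<le> n"
    proof (cases "n = 0")
      case True thus ?thesis by simp
    next
      case False
      have "degree (pCons 0 (qq n)) \<le> Suc (degree (qq n))" by (rule degree_pCons_le)
      with Suc.IH False show ?thesis by (simp only: degree_minus)
    qed
    have b: "degree (monom (1::'k) n - [:bb n:]) \<le> n"
      by (rule degree_diff_le) (simp_all add: degree_monom_le)
    show ?case using degree_diff_le[OF a b] by simp
  qed
qed

lemma coeffq: "coeff (qq n) k = (if k < n then (-1)^k * bb (n - 1 - k) - (if k = n - 1 \<and> odd n then 1 else 0) else 0)"
proof (induction n arbitrary: k)
  case 0 thus ?case by simp
next
  case (Suc n)
  show ?case
  proof (cases k)
    case 0 thus ?thesis by (simp add: coeff_monom)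
  next
    case (Suc j)
    thus ?thesis using Suc.IH[of j] by (auto simp: coeff_monom)
  qed
qed

lemma sumK: "finite I \<Longrightarrow> kap L (LX.E (\<Sum>i\<in>I. monom (v i) i)) = LX.E (\<Sum>i\<in>I. Polynomial.smult (v i) (qq i))"
proof (induction I rule: finite_induct)
  case empty thus ?case by (simp add: kap_zero)
next
  case (insert j I)
  have "kap L (LX.E (\<Sum>i\<in>insert j I. monom (v i) i))
      = kap L (madd C (LX.E (monom (v j) j)) (LX.E (\<Sum>i\<in>I. monom (v i) i)))"
    using insert by (simp add: LX.E_add)
  also have "\<dots> = madd C (kap L (LX.E (monom (v j) j))) (kap L (LX.E (\<Sum>i\<in>I. monom (v i) i)))"
    by (rule kap_add) simp_all
  also have "kap L (LX.E (monom (v j) j)) = LX.E (Polynomial.smult (v j) (qq j))"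
    using kap_sc[of "mpow C (B L) (x L) j" "v j"] mpow_ty[of "x L" "B L" j] kq[of j]
    by (simp add: LX.E_monom LX.E_smult)
  also have "madd C (LX.E (Polynomial.smult (v j) (qq j))) (kap L (LX.E (\<Sum>i\<in>I. monom (v i) i)))
     = LX.E (\<Sum>i\<in>insert j I. Polynomial.smult (v i) (qq i))"
    using insert by (simp add: LX.E_add)
  finally show ?case .
qed

abbreviation "mm \<equiv> minpoly C (B L) (x L)"

lemma mchar: "lead_coeff mm = 1" "LX.E mm = mzero C (B L) (B L)"
    "\<And>q. q \<noteq> 0 \<Longrightarrow> LX.E q = mzero C (B L) (B L) \<Longrightarrow> degree mm \<le> degree q"
  using LX.minpoly_char[OF fdBL] by auto

lemma A_ident: "(\<Sum>j\<le>degree mm. coeff mm j * (if a < j then (-1)^a * bb (j - 1 - a) - (if a = j - 1 \<and> odd j then 1 else 0) else 0)) = 0"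
proof -
  define d where "d = degree mm"
  define R where "R = (\<Sum>i\<le>d. Polynomial.smult (coeff mm i) (qq i))"
  have "LX.E R = kap L (LX.E (\<Sum>i\<le>d. monom (coeff mm i) i))"
    unfolding R_def by (rule sumK[symmetric]) simp
  also have "(\<Sum>i\<le>d. monom (coeff mm i) i) = mm" unfolding d_def by (rule poly_as_sum_of_monoms)
  also have "kap L (LX.E mm) = mzero C (B L) (B L)" using mchar(2) kap_zero by simp
  finally have ER: "LX.E R = mzero C (B L) (B L)" .
  have degR: "degree R \<le> d - 1"
    unfolding R_def
  proof (rule degree_sum_le)
    fix i assume "i \<in> {..d}"
    hence "degree (qq i) \<le> d - 1" using degq[of i] by simp
    thus "degree (Polynomial.smult (coeff mm i) (qq i)) \<le> d - 1"
      using degree_smult_le[of "coeff mm i" "qq i"] by linarith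
  qed simp
  have R0: "R = 0"
  proof (rule ccontr)
    assume "R \<noteq> 0"
    hence "d \<le> degree R" using mchar(3)[OF _ ER] d_def by simp
    hence "d = 0" using degR by simp
    hence "R = 0" unfolding R_def by simp
    thus False using \<open>R \<noteq> 0\<close> by simp
  qed
  have "coeff R a = (\<Sum>j\<le>d. coeff mm j * coeff (qq j) a)" unfolding R_def by (simp add: coeff_sum)
  thus ?thesis using R0 unfolding coeffq d_def by simp
qed

lemma T_ident: "(\<Sum>j\<le>degree mm. coeff mm j * bb (j + s)) = 0"
proof -
  define d where "d = degree mm"
  have "monom 1 s * mm = monom 1 s * (\<Sum>j\<le>d. monom (coeff mm j) j)"
    unfolding d_def by (simp add: poly_as_sum_of_monoms)
  also have "\<dots> = (\<Sum>j\<le>d. monom (coeff mm j) (j + s))"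
    by (simp add: sum_distrib_left mult_monom add.commute)
  finally have e: "monom 1 s * mm = (\<Sum>j\<le>d. monom (coeff mm j) (j + s))" .
  have "tr (monom 1 s * mm) = 0"
    unfolding tr_def sfun_def by (simp add: LX.E_mult mchar(2))
  thus ?thesis unfolding e d_def by (simp add: tr_sum tr_monom)
qed

lemma main_identity: "1 - 2 * Abs_fps bb = ratio_at_infty mm"
proof (rule fps_final[OF mchar(1)])
  fix k
  show "(\<Sum>i=0..k. bb i * (if k - i > degree mm then 0 else coeff mm (degree mm - (k - i))))
            = (if k \<le> degree mm \<and> odd (degree mm - k) then coeff mm (degree mm - k) else 0)"
    by (rule key_lemma) (rule A_ident, rule T_ident)
qed

end

theorem theorem3p10:
  fixes C :: "('o, 'm, 'k::field) lincat" and M :: "('o, 'm) nbdata"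
    and t :: nat and L :: 'o
  assumes "(2::'k) \<noteq> 0"
    and "t \<in> {0, 1}"
    and "is_nb_module C t M"
    and "special C M L"
  shows "O_L C t M L = fps_const ((-1) ^ t) * ratio_at_infty (m_L C M L)"
proof -
  have lc: "is_lincat C" using assms(3) unfolding is_nb_module_def by blast
  interpret NBL C t M L
    by unfold_locales (use lc assms(3,4) in auto)
  show ?thesis unfolding O_L_def m_L_def using main_identity by simp
qed


end
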